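(* Let $p,q\in\Bbbk^\times$. Then $D(q)\cong D(p)$ if and only if $p=q^{\pm1}$.
   Context: $\Bbbk$ is an algebraically closed field of characteristic zero. Paths are written left to right. Let $Q$ be the quiver with vertices $e_1,e_2$, arrows $a,c:e_1\to e_2$ and $b,d:e_2\to e_1$; for $q\in\Bbbk^\times$, $D(q)=\Bbbk Q/(ab-(a+c)d,\ ba-q\,dc)$. *)

theory Defs
  imports "HOL-Algebra.QuotRing" "HOL-Computational_Algebra.Polynomial"
begin

definition alg_closed :: "'a::field itself \<Rightarrow> bool" where
  "alg_closed _ \<longleftrightarrow> (\<forall>P :: 'a poly. degree P > 0 \<longrightarrow> (\<exists>x. poly P x = 0))"

datatype vtx = E1 | E2
datatype arr = Aa | Bb | Cc | Dd

fun src :: "arr \<Rightarrow> vtx" where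
  "src Aa = E1" | "src Cc = E1" | "src Bb = E2" | "src Dd = E2"

fun tgt :: "arr \<Rightarrow> vtx" where
  "tgt Aa = E2" | "tgt Cc = E2" | "tgt Bb = E1" | "tgt Dd = E1"

text \<open>A path is a starting vertex together with a list of composable arrows
  (written left to right); the empty list gives the trivial path at the vertex.\<close>
type_synonym path = "vtx \<times> arr list"

fun valid_from :: "vtx \<Rightarrow> arr list \<Rightarrow> bool" where
  "valid_from v [] = True"
| "valid_from v (x # xs) = (src x = v \<and> valid_from (tgt x) xs)"

definition valid_path :: "path \<Rightarrow> bool" where
  "valid_path pth = valid_from (fst pth) (snd pth)"

definition end_vtx :: "path \<Rightarrow> vtx" where
  "end_vtx pth = (if snd pth = [] then fst pth else tgt (last (snd pth)))"

definition path_mult :: "path \<Rightarrow> path \<Rightarrow> path option" where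
  "path_mult x y = (if end_vtx x = fst y then Some (fst x, snd x @ snd y) else None)"

definition supp :: "(path \<Rightarrow> 'k::field) \<Rightarrow> path set" where
  "supp f = {x. f x \<noteq> 0}"

definition pa_mult :: "(path \<Rightarrow> 'k::field) \<Rightarrow> (path \<Rightarrow> 'k) \<Rightarrow> (path \<Rightarrow> 'k)" where
  "pa_mult f g = (\<lambda>z. \<Sum>(x, y) \<in> {(x, y) \<in> supp f \<times> supp g. path_mult x y = Some z}. f x * g y)"

definition path_alg :: "(path \<Rightarrow> 'k::field) ring" where
  "path_alg = \<lparr> partial_object.carrier = {f. finite (supp f) \<and> (\<forall>x \<in> supp f. valid_path x)},
                monoid.mult = pa_mult,
                monoid.one = (\<lambda>z. if z = (E1, []) \<or> z = (E2, []) then 1 else 0),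
                ring.zero = (\<lambda>_. 0),
                ring.add = (\<lambda>f g z. f z + g z) \<rparr>"

definition pa_smult :: "'k::field \<Rightarrow> (path \<Rightarrow> 'k) \<Rightarrow> (path \<Rightarrow> 'k)" where
  "pa_smult c f = (\<lambda>z. c * f z)"

definition basis_path :: "path \<Rightarrow> (path \<Rightarrow> 'k::field)" where
  "basis_path pth = (\<lambda>z. if z = pth then 1 else 0)"

definition arr_a :: "path \<Rightarrow> 'k::field" where "arr_a = basis_path (E1, [Aa])"
definition arr_b :: "path \<Rightarrow> 'k::field" where "arr_b = basis_path (E2, [Bb])"
definition arr_c :: "path \<Rightarrow> 'k::field" where "arr_c = basis_path (E1, [Cc])"
definition arr_d :: "path \<Rightarrow> 'k::field" where "arr_d = basis_path (E2, [Dd])"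

definition D_ideal :: "'k::field \<Rightarrow> (path \<Rightarrow> 'k) set" where
  "D_ideal q = genideal path_alg
     { arr_a \<otimes>\<^bsub>path_alg\<^esub> arr_b \<ominus>\<^bsub>path_alg\<^esub>
         ((arr_a \<oplus>\<^bsub>path_alg\<^esub> arr_c) \<otimes>\<^bsub>path_alg\<^esub> arr_d),
       arr_b \<otimes>\<^bsub>path_alg\<^esub> arr_a \<ominus>\<^bsub>path_alg\<^esub>
         pa_smult q (arr_d \<otimes>\<^bsub>path_alg\<^esub> arr_c) }"

definition D_alg :: "'k::field \<Rightarrow> (path \<Rightarrow> 'k) set ring" where
  "D_alg q = path_alg Quot (D_ideal q)"

text \<open>Isomorphism of k-algebras D(q) \<cong> D(p): a ring isomorphism of the quotient
  rings which is k-linear (scalars act on cosets via representatives).\<close>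
definition D_alg_iso :: "'k::field \<Rightarrow> 'k \<Rightarrow> bool" where
  "D_alg_iso q p \<longleftrightarrow> (\<exists>\<phi>. \<phi> \<in> ring_iso (D_alg q) (D_alg p) \<and>
     (\<forall>c f g. f \<in> carrier path_alg \<longrightarrow> g \<in> carrier path_alg \<longrightarrow>
        \<phi> (D_ideal q +>\<^bsub>path_alg\<^esub> f) = D_ideal p +>\<^bsub>path_alg\<^esub> g \<longrightarrow>
        \<phi> (D_ideal q +>\<^bsub>path_alg\<^esub> pa_smult c f) = D_ideal p +>\<^bsub>path_alg\<^esub> pa_smult c g))"

end

theory Submission
  imports Defs
begin


lemma tri_swap:
  fixes F :: "nat \<Rightarrow> nat \<Rightarrow> 'a::comm_monoid_add"
  shows "(\<Sum>k\<le>n. \<Sum>j\<le>k. F j k) = (\<Sum>j\<le>n. \<Sum>i\<le>n-j. F j (j+i))"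
proof (induction n)
  case 0 then show ?case by simp
next
  case (Suc n)
  have "(\<Sum>j\<le>Suc n. \<Sum>i\<le>Suc n-j. F j (j+i)) = (\<Sum>j\<le>n. \<Sum>i\<le>Suc n-j. F j (j+i)) + F (Suc n) (Suc n)"
    by simp
  also have "(\<Sum>j\<le>n. \<Sum>i\<le>Suc n-j. F j (j+i)) = (\<Sum>j\<le>n. (\<Sum>i\<le>n-j. F j (j+i)) + F j (Suc n))"
  proof (rule sum.cong[OF refl])
    fix j assume "j \<in> {..n}"
    then have "Suc n - j = Suc (n - j)" by auto
    then show "(\<Sum>i\<le>Suc n-j. F j (j+i)) = (\<Sum>i\<le>n-j. F j (j+i)) + F j (Suc n)"
      using \<open>j \<in> {..n}\<close> by simp
  qed
  finally show ?case using Suc by (simp add: sum.distrib add.assoc)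
qed

lemma end_vtx_Nil[simp]: "end_vtx (v, []) = v"
  by (simp add: end_vtx_def)

lemma end_vtx_snoc[simp]: "end_vtx (v, xs @ [x]) = tgt x"
  by (simp add: end_vtx_def)

lemma end_vtx_append: "end_vtx (end_vtx (v, xs), ys) = end_vtx (v, xs @ ys)"
  by (simp add: end_vtx_def)

lemma path_mult_Some_iff:
  "path_mult x y = Some (v, zs) \<longleftrightarrow>
     (\<exists>k\<le>length zs. x = (v, take k zs) \<and> y = (end_vtx (v, take k zs), drop k zs))"
proof
  assume "path_mult x y = Some (v, zs)"
  then obtain xs w ys where x: "x = (v, xs)" and y: "y = (w, ys)" and zs: "zs = xs @ ys"
    and w: "w = end_vtx x"
    by (cases x; cases y; auto simp: path_mult_def split: if_splits)
  then show "\<exists>k\<le>length zs. x = (v, take k zs) \<and> y = (end_vtx (v, take k zs), drop k zs)"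
    by (intro exI[of _ "length xs"]) auto
next
  assume "\<exists>k\<le>length zs. x = (v, take k zs) \<and> y = (end_vtx (v, take k zs), drop k zs)"
  then show "path_mult x y = Some (v, zs)"
    by (auto simp: path_mult_def)
qed

lemma pa_mult_eq:
  "pa_mult f g (v, zs) = (\<Sum>k\<le>length zs. f (v, take k zs) * g (end_vtx (v, take k zs), drop k zs))"
proof -
  define h where "h = (\<lambda>k. ((v, take k zs), (end_vtx (v, take k zs), drop k zs)))"
  define S where "S = {(x, y) \<in> supp f \<times> supp g. path_mult x y = Some (v, zs)}"
  have ST: "S \<subseteq> h ` {..length zs}"
    by (auto simp: S_def h_def path_mult_Some_iff)
  have inj: "inj_on h {..length zs}"
    by (rule inj_onI) (auto simp: h_def dest!: arg_cong[where f=length])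
  have "pa_mult f g (v, zs) = (\<Sum>(x, y) \<in> S. f x * g y)"
    by (simp add: pa_mult_def S_def)
  also have "\<dots> = (\<Sum>(x, y) \<in> h ` {..length zs}. f x * g y)"
    by (rule sum.mono_neutral_left) (auto simp: S_def h_def supp_def path_mult_Some_iff)
  also have "\<dots> = (\<Sum>k\<le>length zs. f (v, take k zs) * g (end_vtx (v, take k zs), drop k zs))"
    by (subst sum.reindex[OF inj]) (simp add: h_def)
  finally show ?thesis .
qed

lemma pa_mult_assoc: "pa_mult (pa_mult f g) h = pa_mult f (pa_mult g h)"
proof (rule ext)
  fix z :: path
  obtain v zs where z: "z = (v, zs)" by (cases z)
  let ?n = "length zs"
  let ?F = "\<lambda>j k. f (v, take j zs) * g (end_vtx (v, take j zs), take (k - j) (drop j zs))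
                 * h (end_vtx (v, take k zs), drop k zs)"
  have "pa_mult (pa_mult f g) h (v, zs) = (\<Sum>k\<le>?n. \<Sum>j\<le>k. ?F j k)"
    apply (simp add: pa_mult_eq sum_distrib_right)
    apply (rule sum.cong[OF refl])
    apply (rule sum.cong[OF refl])
    apply (simp add: min_def take_drop)
    done
  also have "\<dots> = (\<Sum>j\<le>?n. \<Sum>i\<le>?n-j. ?F j (j+i))"
    by (rule tri_swap)
  also have "\<dots> = pa_mult f (pa_mult g h) (v, zs)"
    apply (simp add: pa_mult_eq sum_distrib_left)
    apply (rule sum.cong[OF refl])
    apply (rule sum.cong[OF refl])
    apply (simp add: end_vtx_append take_add mult.assoc add.commute)
    done
  finally show "pa_mult (pa_mult f g) h z = pa_mult f (pa_mult g h) z" by (simp add: z)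
qed

lemma PA_carrier: "carrier path_alg = {f. finite (supp f) \<and> (\<forall>x\<in>supp f. valid_path x)}"
  by (simp add: path_alg_def)
lemma PA_mult[simp]: "x \<otimes>\<^bsub>path_alg\<^esub> y = pa_mult x y"
  by (simp add: path_alg_def)
lemma PA_add[simp]: "x \<oplus>\<^bsub>path_alg\<^esub> y = (\<lambda>z. x z + y z)"
  by (simp add: path_alg_def)
lemma PA_zero[simp]: "\<zero>\<^bsub>path_alg\<^esub> = (\<lambda>_. 0)"
  by (simp add: path_alg_def)
lemma PA_one: "\<one>\<^bsub>path_alg\<^esub> = (\<lambda>z. if snd z = [] then 1 else 0)"
proof -
  have "\<And>z::path. (z = (E1, []) \<or> z = (E2, [])) = (snd z = [])"
  proof -
    fix z :: path
    obtain v zs where "z = (v, zs)" by (cases z)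
    then show "(z = (E1, []) \<or> z = (E2, [])) = (snd z = [])" by (cases v) auto
  qed
  then show ?thesis by (simp add: path_alg_def)
qed

lemma valid_from_append:
  "valid_from v (xs @ ys) \<longleftrightarrow> valid_from v xs \<and> valid_from (end_vtx (v, xs)) ys"
  by (induction xs arbitrary: v) (auto simp: end_vtx_def)

lemma pa_mult_nz:
  assumes "pa_mult f g z \<noteq> 0"
  shows "\<exists>x\<in>supp f. \<exists>y\<in>supp g. path_mult x y = Some z"
proof -
  have "(\<Sum>(x, y) \<in> {(x, y) \<in> supp f \<times> supp g. path_mult x y = Some z}. f x * g y) \<noteq> 0"
    using assms by (simp add: pa_mult_def)
  then obtain pq where "pq \<in> {(x, y) \<in> supp f \<times> supp g. path_mult x y = Some z}"
    using sum.not_neutral_contains_not_neutral by blast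
  then show ?thesis by auto
qed

lemma path_mult_valid:
  assumes "path_mult x y = Some z" "valid_path x" "valid_path y"
  shows "valid_path z"
  using assms by (cases x; cases y) (auto simp: path_mult_def valid_path_def valid_from_append split: if_splits)

lemma pa_mult_closed:
  assumes "f \<in> carrier path_alg" "g \<in> carrier path_alg"
  shows "pa_mult f g \<in> carrier path_alg"
proof -
  have sub: "supp (pa_mult f g) \<subseteq> (\<lambda>(x, y). the (path_mult x y)) ` (supp f \<times> supp g)"
  proof
    fix z assume "z \<in> supp (pa_mult f g)"
    then obtain x y where "x \<in> supp f" "y \<in> supp g" "path_mult x y = Some z"
      using pa_mult_nz[of f g z] by (auto simp: supp_def)
    then show "z \<in> (\<lambda>(x, y). the (path_mult x y)) ` (supp f \<times> supp g)"
      by (auto intro!: image_eqI[where x="(x,y)"])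
  qed
  have "finite (supp (pa_mult f g))"
    by (rule finite_subset[OF sub]) (use assms in \<open>auto simp: PA_carrier\<close>)
  moreover have "\<forall>z\<in>supp (pa_mult f g). valid_path z"
  proof
    fix z assume "z \<in> supp (pa_mult f g)"
    then obtain x y where "x \<in> supp f" "y \<in> supp g" "path_mult x y = Some z"
      using pa_mult_nz[of f g z] by (auto simp: supp_def)
    then show "valid_path z" using assms path_mult_valid by (auto simp: PA_carrier)
  qed
  ultimately show ?thesis by (simp add: PA_carrier)
qed

lemma pa_one_mult: "pa_mult (\<lambda>z. if snd z = [] then 1 else 0) f = f"
proof (rule ext)
  fix z :: path
  obtain v zs where z: "z = (v, zs)" by (cases z)
  have "pa_mult (\<lambda>z. if snd z = [] then 1 else 0) f (v, zs)
      = (\<Sum>k\<le>length zs. if k = 0 then f (v, zs) else 0)"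
    unfolding pa_mult_eq by (rule sum.cong) auto
  then show "pa_mult (\<lambda>z. if snd z = [] then 1 else 0) f z = f z" by (simp add: z)
qed

lemma pa_mult_one: "pa_mult f (\<lambda>z. if snd z = [] then 1 else 0) = f"
proof (rule ext)
  fix z :: path
  obtain v zs where z: "z = (v, zs)" by (cases z)
  have "pa_mult f (\<lambda>z. if snd z = [] then 1 else 0) (v, zs)
      = (\<Sum>k\<le>length zs. if k = length zs then f (v, zs) else 0)"
    unfolding pa_mult_eq by (rule sum.cong) auto
  then show "pa_mult f (\<lambda>z. if snd z = [] then 1 else 0) z = f z" by (simp add: z)
qed

lemma pa_mult_add_left: "pa_mult (\<lambda>z. f z + g z) h = (\<lambda>z. pa_mult f h z + pa_mult g h z)"
proof (rule ext)
  fix z :: path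
  obtain v zs where z: "z = (v, zs)" by (cases z)
  show "pa_mult (\<lambda>z. f z + g z) h z = pa_mult f h z + pa_mult g h z"
    by (simp add: z pa_mult_eq distrib_right sum.distrib)
qed

lemma pa_mult_add_right: "pa_mult h (\<lambda>z. f z + g z) = (\<lambda>z. pa_mult h f z + pa_mult h g z)"
proof (rule ext)
  fix z :: path
  obtain v zs where z: "z = (v, zs)" by (cases z)
  show "pa_mult h (\<lambda>z. f z + g z) z = pa_mult h f z + pa_mult h g z"
    by (simp add: z pa_mult_eq distrib_left sum.distrib)
qed

lemma supp_add: "supp (\<lambda>z. f z + g z) \<subseteq> supp f \<union> supp g"
  by (auto simp: supp_def)

lemma ring_path_alg: "ring (path_alg :: (path \<Rightarrow> 'k::field) ring)"
proof (rule ringI)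
  show "abelian_group (path_alg :: (path \<Rightarrow> 'k::field) ring)"
  proof (rule abelian_groupI)
    fix x y :: "path \<Rightarrow> 'k" assume "x \<in> carrier path_alg" "y \<in> carrier path_alg"
    then show "x \<oplus>\<^bsub>path_alg\<^esub> y \<in> carrier path_alg"
      using supp_add[of x y] by (auto simp: PA_carrier intro: finite_subset)
  next
    show "\<zero>\<^bsub>path_alg\<^esub> \<in> carrier (path_alg :: (path \<Rightarrow> 'k::field) ring)"
      by (simp add: PA_carrier supp_def)
  next
    fix x :: "path \<Rightarrow> 'k" assume x: "x \<in> carrier path_alg"
    show "\<exists>y\<in>carrier path_alg. y \<oplus>\<^bsub>path_alg\<^esub> x = \<zero>\<^bsub>path_alg\<^esub>"
      by (rule bexI[of _ "\<lambda>z. - x z"]) (use x in \<open>auto simp: PA_carrier supp_def\<close>)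
  qed (auto simp: add.assoc add.commute)
next
  show "monoid (path_alg :: (path \<Rightarrow> 'k::field) ring)"
  proof (rule monoidI)
    show "\<one>\<^bsub>path_alg\<^esub> \<in> carrier (path_alg :: (path \<Rightarrow> 'k::field) ring)"
    proof -
      have "supp (\<lambda>z::path. if snd z = [] then (1::'k) else 0) = {(E1, []), (E2, [])}"
      proof -
        have "\<And>z::path. snd z = [] \<Longrightarrow> z = (E1, []) \<or> z = (E2, [])"
        proof -
    fix z :: path
    obtain v zs where "z = (v, zs)" by (cases z)
    then show "snd z = [] \<Longrightarrow> z = (E1, []) \<or> z = (E2, [])" by (cases v) auto
  qed
        then show ?thesis by (auto simp: supp_def)
      qed
      then show ?thesis by (simp add: PA_carrier PA_one valid_path_def)
    qed
  qed (auto simp: pa_mult_closed pa_mult_assoc PA_one pa_one_mult pa_mult_one)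
qed (auto simp: pa_mult_add_left pa_mult_add_right)




interpretation PA: ring "path_alg :: (path \<Rightarrow> 'k::field) ring"
  by (rule ring_path_alg)

lemma PA_carrierI: "finite (supp f) \<Longrightarrow> (\<And>x. f x \<noteq> 0 \<Longrightarrow> valid_path x) \<Longrightarrow> f \<in> carrier path_alg"
  by (auto simp: PA_carrier supp_def)

lemma PA_carrierD: "f \<in> carrier path_alg \<Longrightarrow> f x \<noteq> 0 \<Longrightarrow> valid_path x"
  unfolding PA_carrier supp_def by blast

lemma PA_carrier_fin: "f \<in> carrier path_alg \<Longrightarrow> finite (supp f)"
  by (auto simp: PA_carrier)

lemma PA_neg: "f \<in> carrier path_alg \<Longrightarrow> \<ominus>\<^bsub>path_alg\<^esub> f = (\<lambda>z. - f z)"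
  by (rule PA.minus_equality) (auto simp: PA_carrier supp_def)

lemma PA_minus: "f \<in> carrier path_alg \<Longrightarrow> g \<in> carrier path_alg \<Longrightarrow> f \<ominus>\<^bsub>path_alg\<^esub> g = (\<lambda>z. f z - g z)"
  by (simp add: a_minus_def PA_neg)

lemma ideal_PA_I:
  fixes S :: "(path \<Rightarrow> 'k::field) set"
  assumes "S \<subseteq> carrier path_alg" "(\<lambda>_. 0) \<in> S"
    and "\<And>f g. f \<in> S \<Longrightarrow> g \<in> S \<Longrightarrow> (\<lambda>z. f z + g z) \<in> S"
    and "\<And>f. f \<in> S \<Longrightarrow> (\<lambda>z. - f z) \<in> S"
    and "\<And>f r. f \<in> S \<Longrightarrow> r \<in> carrier path_alg \<Longrightarrow> pa_mult r f \<in> S"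
    and "\<And>f r. f \<in> S \<Longrightarrow> r \<in> carrier path_alg \<Longrightarrow> pa_mult f r \<in> S"
  shows "ideal S (path_alg :: (path \<Rightarrow> 'k::field) ring)"
proof (rule idealI[OF ring_path_alg])
  show "subgroup S (add_monoid (path_alg :: (path \<Rightarrow> 'k::field) ring))"
  proof (rule PA.add.subgroupI)
    show "S \<subseteq> carrier path_alg" using assms(1) by simp
    show "S \<noteq> {}" using assms(2) by auto
    fix a assume "a \<in> S"
    then show "\<ominus>\<^bsub>path_alg\<^esub> a \<in> S"
      using assms(1,4) PA_neg[of a] by auto
  next
    fix a b assume "a \<in> S" "b \<in> S"
    then show "a \<oplus>\<^bsub>path_alg\<^esub> b \<in> S" using assms(3) by simp
  qed
qed (use assms in auto)

lemma supp_basis: "supp (basis_path x :: path \<Rightarrow> 'k::field) = {x}"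
  by (auto simp: supp_def basis_path_def)

lemma basis_mult:
  "pa_mult (basis_path x) (basis_path y) =
     (case path_mult x y of None \<Rightarrow> (\<lambda>_. 0) | Some z \<Rightarrow> (basis_path z :: path \<Rightarrow> 'k::field))"
proof (rule ext)
  fix w
  show "pa_mult (basis_path x) (basis_path y) w =
     (case path_mult x y of None \<Rightarrow> (\<lambda>_. 0) | Some z \<Rightarrow> (basis_path z :: path \<Rightarrow> 'k::field)) w"
  proof (cases "path_mult x y = Some w")
    case True
    then have eq: "{(x', y') \<in> supp (basis_path x :: path \<Rightarrow> 'k) \<times> supp (basis_path y :: path \<Rightarrow> 'k).
                 path_mult x' y' = Some w} = {(x, y)}"
      by (auto simp: supp_basis)
    show ?thesis unfolding pa_mult_def eq using True by (simp add: basis_path_def)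
  next
    case False
    then have eq: "{(x', y') \<in> supp (basis_path x :: path \<Rightarrow> 'k) \<times> supp (basis_path y :: path \<Rightarrow> 'k).
                 path_mult x' y' = Some w} = {}"
      by (auto simp: supp_basis)
    show ?thesis unfolding pa_mult_def eq using False by (auto simp: basis_path_def split: option.split)
  qed
qed

lemma basis_carrier: "valid_path x \<Longrightarrow> basis_path x \<in> carrier path_alg"
  by (simp add: PA_carrier supp_basis)

lemma pa_mult_0: "pa_mult f g (v, []) = f (v, []) * g (v, [])"
  by (simp add: pa_mult_eq)

lemma pa_mult_1: "pa_mult f g (v, [x]) = f (v, []) * g (v, [x]) + f (v, [x]) * g (tgt x, [])"
  by (simp add: pa_mult_eq end_vtx_def)

lemma pa_mult_2: "pa_mult f g (v, [x, y]) =
   f (v, []) * g (v, [x, y]) + f (v, [x]) * g (tgt x, [y]) + f (v, [x, y]) * g (tgt y, [])"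
  by (simp add: pa_mult_eq numeral_2_eq_2 end_vtx_def)

definition R1 :: "path \<Rightarrow> 'k::field" where
  "R1 z = (if z = (E1, [Aa, Bb]) then 1 else 0) - (if z = (E1, [Aa, Dd]) then 1 else 0)
        - (if z = (E1, [Cc, Dd]) then 1 else 0)"

definition R2 :: "'k::field \<Rightarrow> path \<Rightarrow> 'k" where
  "R2 q z = (if z = (E2, [Bb, Aa]) then 1 else 0) - q * (if z = (E2, [Dd, Cc]) then 1 else 0)"

lemma valid_arrs: "valid_path (E1, [Aa])" "valid_path (E1, [Cc])" "valid_path (E2, [Bb])" "valid_path (E2, [Dd])"
  by (auto simp: valid_path_def)

lemma arr_carrier: "arr_a \<in> carrier path_alg" "arr_b \<in> carrier path_alg"
  "arr_c \<in> carrier path_alg" "arr_d \<in> carrier path_alg"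
  by (auto simp: arr_a_def arr_b_def arr_c_def arr_d_def intro!: basis_carrier simp: valid_path_def)

lemma pa_smult_carrier: "f \<in> carrier path_alg \<Longrightarrow> pa_smult c f \<in> carrier path_alg"
  by (rule PA_carrierI) (auto simp: pa_smult_def supp_def PA_carrier intro: finite_subset)

lemma arr_prods:
  "pa_mult arr_a arr_b = (basis_path (E1, [Aa, Bb]) :: path \<Rightarrow> 'k::field)"
  "pa_mult arr_a arr_d = (basis_path (E1, [Aa, Dd]) :: path \<Rightarrow> 'k::field)"
  "pa_mult arr_c arr_d = (basis_path (E1, [Cc, Dd]) :: path \<Rightarrow> 'k::field)"
  "pa_mult arr_b arr_a = (basis_path (E2, [Bb, Aa]) :: path \<Rightarrow> 'k::field)"
  "pa_mult arr_d arr_c = (basis_path (E2, [Dd, Cc]) :: path \<Rightarrow> 'k::field)"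
  by (simp_all add: arr_a_def arr_b_def arr_c_def arr_d_def basis_mult path_mult_def end_vtx_def)

lemma gen1_eq: "arr_a \<otimes>\<^bsub>path_alg\<^esub> arr_b \<ominus>\<^bsub>path_alg\<^esub> ((arr_a \<oplus>\<^bsub>path_alg\<^esub> arr_c) \<otimes>\<^bsub>path_alg\<^esub> arr_d) = (R1 :: path \<Rightarrow> 'k::field)"
proof -
  have c: "pa_mult (arr_a :: path \<Rightarrow> 'k) arr_b \<in> carrier path_alg"
          "pa_mult (\<lambda>z. (arr_a :: path \<Rightarrow> 'k) z + arr_c z) arr_d \<in> carrier path_alg"
    using PA.m_closed[OF arr_carrier(1) arr_carrier(2)]
      PA.m_closed[OF PA.a_closed[OF arr_carrier(1) arr_carrier(3)] arr_carrier(4)] by simp_all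
  show ?thesis
    unfolding PA_mult PA_add
    unfolding PA_minus[OF c]
    unfolding pa_mult_add_left arr_prods
    by (rule ext) (simp add: R1_def basis_path_def)
qed

lemma gen2_eq: "arr_b \<otimes>\<^bsub>path_alg\<^esub> arr_a \<ominus>\<^bsub>path_alg\<^esub> pa_smult q (arr_d \<otimes>\<^bsub>path_alg\<^esub> arr_c) = (R2 q :: path \<Rightarrow> 'k::field)"
proof -
  have c: "pa_mult (arr_b :: path \<Rightarrow> 'k) arr_a \<in> carrier path_alg"
          "pa_smult q (pa_mult (arr_d :: path \<Rightarrow> 'k) arr_c) \<in> carrier path_alg"
    using PA.m_closed[OF arr_carrier(2) arr_carrier(1)]
      pa_smult_carrier[OF PA.m_closed[OF arr_carrier(4) arr_carrier(3)]] by simp_all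
  show ?thesis
    unfolding PA_mult
    unfolding PA_minus[OF c]
    unfolding arr_prods
    by (rule ext) (simp add: R2_def basis_path_def pa_smult_def)
qed

lemma D_ideal_eq: "D_ideal q = genideal path_alg {R1, R2 q}"
  unfolding D_ideal_def gen1_eq gen2_eq ..

lemma R1_carrier: "(R1 :: path \<Rightarrow> 'k::field) \<in> carrier path_alg"
proof -
  have "arr_a \<otimes>\<^bsub>path_alg\<^esub> arr_b \<ominus>\<^bsub>path_alg\<^esub> ((arr_a \<oplus>\<^bsub>path_alg\<^esub> arr_c) \<otimes>\<^bsub>path_alg\<^esub> arr_d) \<in> carrier (path_alg :: (path \<Rightarrow> 'k) ring)"
    by (intro PA.minus_closed PA.m_closed PA.a_closed arr_carrier)
  then show ?thesis by (simp only: gen1_eq)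
qed

lemma R2_carrier: "(R2 q :: path \<Rightarrow> 'k::field) \<in> carrier path_alg"
proof -
  have "arr_b \<otimes>\<^bsub>path_alg\<^esub> arr_a \<ominus>\<^bsub>path_alg\<^esub> pa_smult q (arr_d \<otimes>\<^bsub>path_alg\<^esub> arr_c) \<in> carrier (path_alg :: (path \<Rightarrow> 'k) ring)"
    by (intro PA.minus_closed PA.m_closed PA.a_closed arr_carrier pa_smult_carrier)
  then show ?thesis by (simp only: gen2_eq)
qed

definition Sid :: "'k::field \<Rightarrow> (path \<Rightarrow> 'k) set" where
  "Sid q = {f \<in> carrier path_alg. (\<forall>v. f (v, []) = 0) \<and> (\<forall>v x. f (v, [x]) = 0) \<and>
     (\<exists>l m. \<forall>v x y. f (v, [x, y]) = l * R1 (v, [x, y]) + m * R2 q (v, [x, y]))}"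

lemma R1_v: "R1 (E2, xs) = 0" by (simp add: R1_def)
lemma R2_v: "R2 q (E1, xs) = 0" by (simp add: R2_def)
lemma R1_y: "y = Aa \<or> y = Cc \<Longrightarrow> R1 (v, [x, y]) = 0" by (auto simp: R1_def)
lemma R2_y: "y = Bb \<or> y = Dd \<Longrightarrow> R2 q (v, [x, y]) = 0" by (auto simp: R2_def)

lemma Sid_ideal: "ideal (Sid q) (path_alg :: (path \<Rightarrow> 'k::field) ring)"
proof (rule ideal_PA_I)
  show "Sid q \<subseteq> carrier path_alg" by (auto simp: Sid_def)
  show "(\<lambda>_. 0) \<in> Sid q"
    by (auto simp: Sid_def PA_carrier supp_def intro!: exI[of _ 0])
next
  fix f g assume f: "f \<in> Sid q" and g: "g \<in> Sid q"
  obtain l m where lm: "\<forall>v x y. f (v, [x, y]) = l * R1 (v, [x, y]) + m * R2 q (v, [x, y])"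
    using f by (auto simp: Sid_def)
  obtain l' m' where lm': "\<forall>v x y. g (v, [x, y]) = l' * R1 (v, [x, y]) + m' * R2 q (v, [x, y])"
    using g by (auto simp: Sid_def)
  have "(\<lambda>z. f z + g z) \<in> carrier path_alg"
    using f g PA.a_closed[of f g] by (simp add: Sid_def)
  moreover have "\<forall>v x y. f (v, [x, y]) + g (v, [x, y]) = (l + l') * R1 (v, [x, y]) + (m + m') * R2 q (v, [x, y])"
    using lm lm' by (simp add: algebra_simps)
  ultimately show "(\<lambda>z. f z + g z) \<in> Sid q"
    using f g unfolding Sid_def by auto
next
  fix f assume f: "f \<in> Sid q"
  obtain l m where lm: "\<forall>v x y. f (v, [x, y]) = l * R1 (v, [x, y]) + m * R2 q (v, [x, y])"
    using f by (auto simp: Sid_def)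
  have "(\<lambda>z. - f z) \<in> carrier path_alg"
    using f PA.a_inv_closed[of f] by (simp add: Sid_def PA_neg)
  moreover have "\<exists>l m. \<forall>v x y. - f (v, [x, y]) = l * R1 (v, [x, y]) + m * R2 q (v, [x, y])"
    using lm by (intro exI[of _ "- l"] exI[of _ "- m"]) (simp add: algebra_simps)
  moreover have "\<forall>v. f (v, []) = 0" "\<forall>v x. f (v, [x]) = 0" using f by (auto simp: Sid_def)
  ultimately show "(\<lambda>z. - f z) \<in> Sid q"
    unfolding Sid_def mem_Collect_eq by (intro conjI) (assumption | simp)+
next
  fix f r assume f: "f \<in> Sid q" and r: "r \<in> carrier (path_alg :: (path \<Rightarrow> 'k::field) ring)"
  obtain l m where lm: "\<forall>v x y. f (v, [x, y]) = l * R1 (v, [x, y]) + m * R2 q (v, [x, y])"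
    using f by (auto simp: Sid_def)
  have f0: "\<forall>v. f (v, []) = 0" and f1: "\<forall>v x. f (v, [x]) = 0" using f by (auto simp: Sid_def)
  have c1: "pa_mult r f \<in> carrier path_alg" using f r pa_mult_closed by (auto simp: Sid_def)
  have c2: "pa_mult f r \<in> carrier path_alg" using f r pa_mult_closed by (auto simp: Sid_def)
  have "\<forall>v x y. pa_mult r f (v, [x, y]) = (l * r (E1, [])) * R1 (v, [x, y]) + (m * r (E2, [])) * R2 q (v, [x, y])"
  proof (intro allI)
    fix v x y
    show "pa_mult r f (v, [x, y]) = (l * r (E1, [])) * R1 (v, [x, y]) + (m * r (E2, [])) * R2 q (v, [x, y])"
      using lm f0 f1 by (cases v) (simp_all add: pa_mult_2 R1_v R2_v algebra_simps)
  qed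
  then show "pa_mult r f \<in> Sid q"
    using c1 f0 f1 unfolding Sid_def by (auto simp: pa_mult_0 pa_mult_1)
  have "\<forall>v x y. pa_mult f r (v, [x, y]) = (l * r (E1, [])) * R1 (v, [x, y]) + (m * r (E2, [])) * R2 q (v, [x, y])"
  proof (intro allI)
    fix v x y
    show "pa_mult f r (v, [x, y]) = (l * r (E1, [])) * R1 (v, [x, y]) + (m * r (E2, [])) * R2 q (v, [x, y])"
      using lm f0 f1 by (cases y) (simp_all add: pa_mult_2 R1_y R2_y algebra_simps)
  qed
  then show "pa_mult f r \<in> Sid q"
    using c2 f0 f1 unfolding Sid_def by (auto simp: pa_mult_0 pa_mult_1)
qed

lemma D_ideal_Sid: "D_ideal q \<subseteq> Sid (q :: 'k::field)"
  unfolding D_ideal_eq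
proof (rule PA.genideal_minimal[OF Sid_ideal])
  have "\<forall>v x y. R1 (v, [x, y]) = 1 * R1 (v, [x, y]) + 0 * R2 q (v, [x, y])" by simp
  moreover have "\<forall>v. R1 (v, []) = (0::'k)" "\<forall>v x. R1 (v, [x]) = (0::'k)" by (simp_all add: R1_def)
  ultimately have "R1 \<in> Sid q"
    using R1_carrier unfolding Sid_def by blast
  have "\<forall>v x y. R2 q (v, [x, y]) = 0 * R1 (v, [x, y]) + 1 * R2 q (v, [x, y])" by simp
  moreover have "\<forall>v. R2 q (v, []) = 0" "\<forall>v x. R2 q (v, [x]) = 0" by (simp_all add: R2_def)
  ultimately have "R2 q \<in> Sid q"
    using R2_carrier unfolding Sid_def by blast
  then show "{R1, R2 q} \<subseteq> Sid q" using \<open>R1 \<in> Sid q\<close> by auto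
qed

lemma D_ideal_ideal: "ideal (D_ideal q) (path_alg :: (path \<Rightarrow> 'k::field) ring)"
  unfolding D_ideal_eq by (rule PA.genideal_ideal) (use R1_carrier R2_carrier in auto)

lemma D_ideal_0: "f \<in> D_ideal q \<Longrightarrow> f (v, []) = 0"
  using D_ideal_Sid[of q] unfolding Sid_def by blast
lemma D_ideal_1: "f \<in> D_ideal q \<Longrightarrow> f (v, [x]) = 0"
  using D_ideal_Sid[of q] unfolding Sid_def by blast
lemma D_ideal_2: "f \<in> D_ideal q \<Longrightarrow> \<exists>l m. \<forall>v x y. f (v, [x, y]) = l * R1 (v, [x, y]) + m * R2 q (v, [x, y])"
  using D_ideal_Sid[of q] unfolding Sid_def by blast




definition cg :: "'k::field \<Rightarrow> (path \<Rightarrow> 'k) \<Rightarrow> (path \<Rightarrow> 'k) \<Rightarrow> bool" where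
  "cg q f g \<longleftrightarrow> (\<lambda>z. f z - g z) \<in> D_ideal q"

lemma DI_sub: "D_ideal q \<subseteq> carrier (path_alg :: (path \<Rightarrow> 'k::field) ring)"
  using ideal.axioms(1)[OF D_ideal_ideal] additive_subgroup.a_subset by blast

lemma DI_add: "a \<in> D_ideal q \<Longrightarrow> b \<in> D_ideal q \<Longrightarrow> (\<lambda>z. a z + b z) \<in> D_ideal (q::'k::field)"
  using additive_subgroup.a_closed[OF ideal.axioms(1)[OF D_ideal_ideal], of a q b] by simp

lemma DI_neg: "a \<in> D_ideal q \<Longrightarrow> (\<lambda>z. - a z) \<in> D_ideal (q::'k::field)"
  using additive_subgroup.a_inv_closed[OF ideal.axioms(1)[OF D_ideal_ideal], of a q] DI_sub[of q]
  by (auto simp: PA_neg)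

lemma DI_zero: "(\<lambda>_. 0) \<in> D_ideal (q::'k::field)"
  using additive_subgroup.zero_closed[OF ideal.axioms(1)[OF D_ideal_ideal], of q] by simp

lemma DI_lmult: "a \<in> D_ideal q \<Longrightarrow> r \<in> carrier path_alg \<Longrightarrow> pa_mult r a \<in> D_ideal (q::'k::field)"
  using ideal.I_l_closed[OF D_ideal_ideal] by fastforce

lemma DI_abel: "abelian_subgroup (D_ideal q) (path_alg :: (path \<Rightarrow> 'k::field) ring)"
  by (rule abelian_subgroupI3[OF ideal.axioms(1)[OF D_ideal_ideal] PA.abelian_group_axioms])

lemma cg_refl: "cg q f f"
  by (simp add: cg_def DI_zero)

lemma cg_sym: "cg q f g \<Longrightarrow> cg q g f"
  unfolding cg_def by (drule DI_neg) simp

lemma cg_trans: "cg q f g \<Longrightarrow> cg q g h \<Longrightarrow> cg q f h"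
  unfolding cg_def by (drule (1) DI_add) simp

lemma cg_add: "cg q f f' \<Longrightarrow> cg q g g' \<Longrightarrow> cg q (\<lambda>z. f z + g z) (\<lambda>z. f' z + g' z)"
  unfolding cg_def by (drule (1) DI_add) (simp add: algebra_simps)

lemma cg_neg: "cg q f f' \<Longrightarrow> cg q (\<lambda>z. - f z) (\<lambda>z. - f' z)"
  unfolding cg_def by (drule DI_neg) (simp add: algebra_simps)

lemma cg_diff: "cg q f f' \<Longrightarrow> cg q g g' \<Longrightarrow> cg q (\<lambda>z. f z - g z) (\<lambda>z. f' z - g' z)"
  using cg_add[OF _ cg_neg, of q f f' g g'] by simp

lemma cg_ideal: "cg q f g \<Longrightarrow> g \<in> D_ideal q \<Longrightarrow> f \<in> D_ideal q"
  unfolding cg_def by (drule (1) DI_add) simp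

lemma cg_0: "cg q f g \<Longrightarrow> f (v, []) = g (v, [])"
  unfolding cg_def by (drule D_ideal_0) simp

lemma cg_1: "cg q f g \<Longrightarrow> f (v, [x]) = g (v, [x])"
  unfolding cg_def by (drule D_ideal_1) simp

lemma coset_eq:
  assumes "f \<in> carrier path_alg" "g \<in> carrier path_alg"
  shows "(D_ideal q +>\<^bsub>path_alg\<^esub> f = D_ideal q +>\<^bsub>path_alg\<^esub> g) \<longleftrightarrow> cg (q::'k::field) f g"
proof -
  have mod: "(f \<in> D_ideal q +>\<^bsub>path_alg\<^esub> g) = (f \<ominus>\<^bsub>path_alg\<^esub> g \<in> D_ideal q)"
    by (rule abelian_subgroup.a_rcos_module_minus[OF DI_abel ring_path_alg assms(2) assms(1)])
  show ?thesis
  proof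
    assume "D_ideal q +>\<^bsub>path_alg\<^esub> f = D_ideal q +>\<^bsub>path_alg\<^esub> g"
    moreover have "f \<in> D_ideal q +>\<^bsub>path_alg\<^esub> f"
      by (rule abelian_subgroup.a_rcos_self[OF DI_abel assms(1)])
    ultimately show "cg q f g" using mod by (simp add: cg_def PA_minus assms)
  next
    assume "cg q f g"
    then have "f \<in> D_ideal q +>\<^bsub>path_alg\<^esub> g" using mod by (simp add: cg_def PA_minus assms)
    then show "D_ideal q +>\<^bsub>path_alg\<^esub> f = D_ideal q +>\<^bsub>path_alg\<^esub> g"
      using abelian_subgroup.a_repr_independence'[OF DI_abel _ assms(2)] by metis
  qed
qed

lemma D_alg_carrier: "carrier (D_alg q) = (\<lambda>f. D_ideal q +>\<^bsub>path_alg\<^esub> f) ` carrier (path_alg :: (path \<Rightarrow> 'k::field) ring)"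
  by (auto simp: D_alg_def FactRing_def A_RCOSETS_def')

lemma D_alg_ring: "ring (D_alg (q::'k::field))"
  unfolding D_alg_def by (rule ideal.quotient_is_ring[OF D_ideal_ideal])

lemma D_alg_hom: "(\<lambda>f. D_ideal q +>\<^bsub>path_alg\<^esub> f) \<in> ring_hom path_alg (D_alg (q::'k::field))"
  unfolding D_alg_def by (rule ideal.rcos_ring_hom[OF D_ideal_ideal])

lemma D_alg_mult: "f \<in> carrier path_alg \<Longrightarrow> g \<in> carrier path_alg \<Longrightarrow>
   (D_ideal q +>\<^bsub>path_alg\<^esub> f) \<otimes>\<^bsub>D_alg q\<^esub> (D_ideal q +>\<^bsub>path_alg\<^esub> g) = D_ideal (q::'k::field) +>\<^bsub>path_alg\<^esub> pa_mult f g"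
  using ring_hom_mult[OF D_alg_hom, of f g q] by simp

lemma D_alg_add: "f \<in> carrier path_alg \<Longrightarrow> g \<in> carrier path_alg \<Longrightarrow>
   (D_ideal q +>\<^bsub>path_alg\<^esub> f) \<oplus>\<^bsub>D_alg q\<^esub> (D_ideal q +>\<^bsub>path_alg\<^esub> g) = D_ideal (q::'k::field) +>\<^bsub>path_alg\<^esub> (\<lambda>z. f z + g z)"
  using ring_hom_add[OF D_alg_hom, of f g q] by simp

lemma D_alg_one: "\<one>\<^bsub>D_alg q\<^esub> = D_ideal (q::'k::field) +>\<^bsub>path_alg\<^esub> \<one>\<^bsub>path_alg\<^esub>"
  using ring_hom_one[OF D_alg_hom, of q] by simp

lemma D_alg_zero: "\<zero>\<^bsub>D_alg q\<^esub> = D_ideal (q::'k::field)"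
  by (simp add: D_alg_def FactRing_def)

lemma coset_ideal: "f \<in> D_ideal q \<Longrightarrow> D_ideal q +>\<^bsub>path_alg\<^esub> f = D_ideal (q::'k::field)"
  by (rule abelian_subgroup.a_rcos_const[OF DI_abel])


definition ba :: "arr \<Rightarrow> path \<Rightarrow> 'k::field" where "ba x = basis_path (src x, [x])"
definition bv :: "vtx \<Rightarrow> path \<Rightarrow> 'k::field" where "bv v = basis_path (v, [])"
definition dl :: "(path \<Rightarrow> 'k::field) \<Rightarrow> arr \<Rightarrow> path \<Rightarrow> 'k" where
  "dl f x = (\<lambda>z. f (fst z, snd z @ [x]))"

lemma src_ne_tgt: "tgt x \<noteq> src x" by (cases x) auto

lemma ba_carrier: "ba x \<in> carrier path_alg"
  unfolding ba_def by (rule basis_carrier) (simp add: valid_path_def)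

lemma bv_carrier: "bv v \<in> carrier path_alg"
  unfolding bv_def by (rule basis_carrier) (simp add: valid_path_def)

lemma bv_ba: "pa_mult (bv (src x)) (ba x) = (ba x :: path \<Rightarrow> 'k::field)"
  by (simp add: bv_def ba_def basis_mult path_mult_def end_vtx_def)

lemma ba_bv: "pa_mult (ba x) (bv (src x)) = (\<lambda>_. 0 :: 'k::field)"
  using src_ne_tgt[of x] by (simp add: bv_def ba_def basis_mult path_mult_def end_vtx_def)

lemma drop_eq_single:
  assumes "k \<le> length zs"
  shows "(drop k zs = [x]) \<longleftrightarrow> (k = length zs - 1 \<and> zs \<noteq> [] \<and> last zs = x)"
proof
  assume h: "drop k zs = [x]"
  then have "length (drop k zs) = 1" by simp
  then have "length zs - k = 1" by simp
  moreover have "zs = take k zs @ [x]" using h append_take_drop_id[of k zs] by simp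
  then have "last zs = x" by (metis last_snoc)
  ultimately show "k = length zs - 1 \<and> zs \<noteq> [] \<and> last zs = x" by auto
next
  assume h: "k = length zs - 1 \<and> zs \<noteq> [] \<and> last zs = x"
  then have "zs \<noteq> []" by simp
  then have zs: "zs = butlast zs @ [last zs]" by simp
  have "drop (length (butlast zs)) (butlast zs @ [last zs]) = [last zs]" by simp
  then show "drop k zs = [x]" using h zs by (metis length_butlast)
qed

lemma mult_ba:
  "pa_mult g (ba x) (v, zs) =
    (if zs \<noteq> [] \<and> last zs = x \<and> end_vtx (v, butlast zs) = src x then g (v, butlast zs) else (0::'k::field))"
proof -
  have "pa_mult g (ba x) (v, zs) =
    (\<Sum>k\<le>length zs. if k = length zs - 1 then
        (if zs \<noteq> [] \<and> last zs = x \<and> end_vtx (v, butlast zs) = src x then g (v, butlast zs) else 0) else 0)"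
    unfolding pa_mult_eq
  proof (rule sum.cong[OF refl])
    fix k assume k: "k \<in> {..length zs}"
    show "g (v, take k zs) * ba x (end_vtx (v, take k zs), drop k zs) =
      (if k = length zs - 1 then
        (if zs \<noteq> [] \<and> last zs = x \<and> end_vtx (v, butlast zs) = src x then g (v, butlast zs) else 0) else 0)"
      using k drop_eq_single[of k zs x] by (auto simp: ba_def basis_path_def butlast_conv_take)
  qed
  also have "\<dots> = (if zs \<noteq> [] \<and> last zs = x \<and> end_vtx (v, butlast zs) = src x then g (v, butlast zs) else 0)"
    by (simp add: sum.delta)
  finally show ?thesis .
qed

lemma dl_carrier:
  assumes "f \<in> carrier path_alg"
  shows "dl f x \<in> carrier path_alg"
proof (rule PA_carrierI)
  have "supp (dl f x) \<subseteq> (\<lambda>z. (fst z, butlast (snd z))) ` supp f"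
  proof
    fix z assume "z \<in> supp (dl f x)"
    then have "(fst z, snd z @ [x]) \<in> supp f" by (simp add: supp_def dl_def)
    then show "z \<in> (\<lambda>z. (fst z, butlast (snd z))) ` supp f"
      by (intro image_eqI[where x="(fst z, snd z @ [x])"]) auto
  qed
  then show "finite (supp (dl f x))"
    using PA_carrier_fin[OF assms] by (meson finite_subset finite_imageI)
next
  fix z assume "dl f x z \<noteq> 0"
  then have "valid_path (fst z, snd z @ [x])" using PA_carrierD[OF assms] by (simp add: dl_def)
  then show "valid_path z" by (simp add: valid_path_def valid_from_append)
qed

lemma decomp:
  assumes "f \<in> carrier path_alg" "\<forall>v. f (v, []) = 0"
  shows "f = (\<lambda>z. pa_mult (dl f Aa) (ba Aa) z + (pa_mult (dl f Bb) (ba Bb) z +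
               (pa_mult (dl f Cc) (ba Cc) z + pa_mult (dl f Dd) (ba Dd) z)))"
proof (rule ext)
  fix z :: path
  obtain v zs where z: "z = (v, zs)" by (cases z)
  show "f z = pa_mult (dl f Aa) (ba Aa) z + (pa_mult (dl f Bb) (ba Bb) z +
               (pa_mult (dl f Cc) (ba Cc) z + pa_mult (dl f Dd) (ba Dd) z))"
  proof (cases "zs = []")
    case True then show ?thesis using assms(2) by (simp add: z mult_ba)
  next
    case False
    then have zs: "zs = butlast zs @ [last zs]" by simp
    have "f (v, zs) = (if end_vtx (v, butlast zs) = src (last zs) then f (v, butlast zs @ [last zs]) else 0)"
    proof (cases "end_vtx (v, butlast zs) = src (last zs)")
      case False
      have "\<not> valid_path (v, zs)"
        using False by (subst zs) (simp add: valid_path_def valid_from_append)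
      then show ?thesis using False PA_carrierD[OF assms(1), of "(v, zs)"] by auto
    qed (simp flip: zs)
    then show ?thesis using False
      by (cases "last zs") (simp_all add: z mult_ba dl_def)
  qed
qed

locale DH =
  fixes \<phi> :: "(path \<Rightarrow> 'k::field) set \<Rightarrow> (path \<Rightarrow> 'k) set" and q1 q2 :: 'k
  assumes hom: "\<phi> \<in> ring_hom (D_alg q1) (D_alg q2)"
begin

definition rep :: "(path \<Rightarrow> 'k) \<Rightarrow> (path \<Rightarrow> 'k)" where
  "rep f = (SOME g. g \<in> carrier path_alg \<and> \<phi> (D_ideal q1 +>\<^bsub>path_alg\<^esub> f) = D_ideal q2 +>\<^bsub>path_alg\<^esub> g)"

lemma rep:
  assumes "f \<in> carrier path_alg"
  shows "rep f \<in> carrier path_alg \<and> \<phi> (D_ideal q1 +>\<^bsub>path_alg\<^esub> f) = D_ideal q2 +>\<^bsub>path_alg\<^esub> rep f"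
proof -
  have "D_ideal q1 +>\<^bsub>path_alg\<^esub> f \<in> carrier (D_alg q1)"
    using assms by (simp add: D_alg_carrier)
  then have "\<phi> (D_ideal q1 +>\<^bsub>path_alg\<^esub> f) \<in> carrier (D_alg q2)"
    by (rule ring_hom_closed[OF hom])
  then have "\<exists>g. g \<in> carrier path_alg \<and> \<phi> (D_ideal q1 +>\<^bsub>path_alg\<^esub> f) = D_ideal q2 +>\<^bsub>path_alg\<^esub> g"
    by (auto simp: D_alg_carrier)
  then show ?thesis unfolding rep_def by (rule someI_ex)
qed

lemma rep_carrier: "f \<in> carrier path_alg \<Longrightarrow> rep f \<in> carrier path_alg"
  using rep by blast

lemma rep_eq: "f \<in> carrier path_alg \<Longrightarrow> \<phi> (D_ideal q1 +>\<^bsub>path_alg\<^esub> f) = D_ideal q2 +>\<^bsub>path_alg\<^esub> rep f"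
  using rep by blast

lemma rep_mult:
  assumes "f \<in> carrier path_alg" "g \<in> carrier path_alg"
  shows "cg q2 (rep (pa_mult f g)) (pa_mult (rep f) (rep g))"
proof -
  have "D_ideal q2 +>\<^bsub>path_alg\<^esub> rep (pa_mult f g) = \<phi> (D_ideal q1 +>\<^bsub>path_alg\<^esub> pa_mult f g)"
    using rep_eq[OF pa_mult_closed[OF assms]] by simp
  also have "\<dots> = \<phi> ((D_ideal q1 +>\<^bsub>path_alg\<^esub> f) \<otimes>\<^bsub>D_alg q1\<^esub> (D_ideal q1 +>\<^bsub>path_alg\<^esub> g))"
    using D_alg_mult[OF assms] by simp
  also have "\<dots> = \<phi> (D_ideal q1 +>\<^bsub>path_alg\<^esub> f) \<otimes>\<^bsub>D_alg q2\<^esub> \<phi> (D_ideal q1 +>\<^bsub>path_alg\<^esub> g)"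
    by (rule ring_hom_mult[OF hom]) (use assms in \<open>simp_all add: D_alg_carrier\<close>)
  also have "\<dots> = D_ideal q2 +>\<^bsub>path_alg\<^esub> pa_mult (rep f) (rep g)"
    using assms by (simp add: rep_eq D_alg_mult rep_carrier)
  finally show ?thesis
    by (subst coset_eq[symmetric]) (use assms in \<open>simp_all add: rep_carrier pa_mult_closed\<close>)
qed

lemma rep_add:
  assumes "f \<in> carrier path_alg" "g \<in> carrier path_alg"
  shows "cg q2 (rep (\<lambda>z. f z + g z)) (\<lambda>z. rep f z + rep g z)"
proof -
  have c: "(\<lambda>z. f z + g z) \<in> carrier path_alg" using PA.a_closed[OF assms] by simp
  have c2: "(\<lambda>z. rep f z + rep g z) \<in> carrier path_alg"
    using PA.a_closed[OF rep_carrier[OF assms(1)] rep_carrier[OF assms(2)]] by simp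
  have "D_ideal q2 +>\<^bsub>path_alg\<^esub> rep (\<lambda>z. f z + g z) = \<phi> (D_ideal q1 +>\<^bsub>path_alg\<^esub> (\<lambda>z. f z + g z))"
    using rep_eq[OF c] by simp
  also have "\<dots> = \<phi> ((D_ideal q1 +>\<^bsub>path_alg\<^esub> f) \<oplus>\<^bsub>D_alg q1\<^esub> (D_ideal q1 +>\<^bsub>path_alg\<^esub> g))"
    using D_alg_add[OF assms] by simp
  also have "\<dots> = \<phi> (D_ideal q1 +>\<^bsub>path_alg\<^esub> f) \<oplus>\<^bsub>D_alg q2\<^esub> \<phi> (D_ideal q1 +>\<^bsub>path_alg\<^esub> g)"
    by (rule ring_hom_add[OF hom]) (use assms in \<open>simp_all add: D_alg_carrier\<close>)
  also have "\<dots> = D_ideal q2 +>\<^bsub>path_alg\<^esub> (\<lambda>z. rep f z + rep g z)"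
    using assms by (simp add: rep_eq D_alg_add rep_carrier)
  finally show ?thesis
    by (subst coset_eq[symmetric]) (use assms c c2 in \<open>simp_all add: rep_carrier\<close>)
qed

lemma rep_one: "cg q2 (rep \<one>\<^bsub>path_alg\<^esub>) \<one>\<^bsub>path_alg\<^esub>"
proof -
  have "D_ideal q2 +>\<^bsub>path_alg\<^esub> rep \<one>\<^bsub>path_alg\<^esub> = \<phi> (D_ideal q1 +>\<^bsub>path_alg\<^esub> \<one>\<^bsub>path_alg\<^esub>)"
    using rep_eq[OF PA.one_closed] by simp
  also have "\<dots> = D_ideal q2 +>\<^bsub>path_alg\<^esub> \<one>\<^bsub>path_alg\<^esub>"
    using ring_hom_one[OF hom] by (simp add: D_alg_one)
  finally show ?thesis
    by (subst coset_eq[symmetric]) (simp_all add: rep_carrier)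
qed

lemma rep_ideal:
  assumes "f \<in> D_ideal q1"
  shows "rep f \<in> D_ideal q2"
proof -
  have fc: "f \<in> carrier path_alg" using assms DI_sub by blast
  have "D_ideal q2 +>\<^bsub>path_alg\<^esub> rep f = \<phi> (D_ideal q1 +>\<^bsub>path_alg\<^esub> f)"
    using rep_eq[OF fc] by simp
  also have "\<dots> = \<phi> \<zero>\<^bsub>D_alg q1\<^esub>" using coset_ideal[OF assms] by (simp add: D_alg_zero)
  also have "\<dots> = \<zero>\<^bsub>D_alg q2\<^esub>" by (rule ring_hom_zero[OF hom D_alg_ring D_alg_ring])
  finally have "D_ideal q2 +>\<^bsub>path_alg\<^esub> rep f = D_ideal q2" by (simp add: D_alg_zero)
  moreover have "rep f \<in> D_ideal q2 +>\<^bsub>path_alg\<^esub> rep f"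
    by (rule abelian_subgroup.a_rcos_self[OF DI_abel rep_carrier[OF fc]])
  ultimately show ?thesis by simp
qed

lemma rep_m0: "f \<in> carrier path_alg \<Longrightarrow> g \<in> carrier path_alg \<Longrightarrow>
  rep (pa_mult f g) (v, []) = rep f (v, []) * rep g (v, [])"
  using cg_0[OF rep_mult] by (simp add: pa_mult_0)

lemma rep_m1: "f \<in> carrier path_alg \<Longrightarrow> g \<in> carrier path_alg \<Longrightarrow>
  rep (pa_mult f g) (v, [x]) = rep f (v, []) * rep g (v, [x]) + rep f (v, [x]) * rep g (tgt x, [])"
  using cg_1[OF rep_mult] by (simp add: pa_mult_1)

lemma rep_a0: "f \<in> carrier path_alg \<Longrightarrow> g \<in> carrier path_alg \<Longrightarrow>
  rep (\<lambda>z. f z + g z) (v, []) = rep f (v, []) + rep g (v, [])"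
  using cg_0[OF rep_add] by simp

lemma rep_a1: "f \<in> carrier path_alg \<Longrightarrow> g \<in> carrier path_alg \<Longrightarrow>
  rep (\<lambda>z. f z + g z) (v, [x]) = rep f (v, [x]) + rep g (v, [x])"
  using cg_1[OF rep_add] by simp

lemma rep_zero0: "rep (\<lambda>_. 0) (v, []) = 0"
  using D_ideal_0[OF rep_ideal[OF DI_zero]] by simp

lemma rep_arr0: "rep (ba x) (v, []) = 0"
proof -
  have "rep (ba x) (v, []) = rep (bv (src x)) (v, []) * rep (ba x) (v, [])"
    using rep_m0[OF bv_carrier ba_carrier, of "src x" x v] by (simp add: bv_ba)
  moreover have "0 = rep (ba x) (v, []) * rep (bv (src x)) (v, [])"
    using rep_m0[OF ba_carrier bv_carrier, of x "src x" v] by (simp add: ba_bv rep_zero0)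
  ultimately show ?thesis by (simp add: mult.commute)
qed

lemma stepA:
  assumes "f \<in> carrier path_alg" "\<forall>v. f (v, []) = 0"
  shows "rep f (v, []) = 0"
proof -
  have c: "\<And>x. dl f x \<in> carrier path_alg" by (rule dl_carrier[OF assms(1)])
  have m: "\<And>x. pa_mult (dl f x) (ba x) \<in> carrier path_alg" by (rule pa_mult_closed[OF c ba_carrier])
  have m0: "\<And>x. rep (pa_mult (dl f x) (ba x)) (v, []) = 0"
    using rep_m0[OF c ba_carrier] by (simp add: rep_arr0)
  have s1: "(\<lambda>z. pa_mult (dl f Cc) (ba Cc) z + pa_mult (dl f Dd) (ba Dd) z) \<in> carrier path_alg"
    using PA.a_closed[OF m m] by simp
  have s2: "(\<lambda>z. pa_mult (dl f Bb) (ba Bb) z + (pa_mult (dl f Cc) (ba Cc) z + pa_mult (dl f Dd) (ba Dd) z)) \<in> carrier path_alg"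
    using PA.a_closed[OF m s1] by simp
  show ?thesis
    by (subst decomp[OF assms]) (simp add: rep_a0[OF m s2] rep_a0[OF m s1] rep_a0[OF m m] m0)
qed

lemma stepA2:
  assumes "f \<in> carrier path_alg" "\<forall>v. f (v, []) = 0" "\<forall>v x. f (v, [x]) = 0"
  shows "rep f (v, [y]) = 0"
proof -
  have c: "\<And>x. dl f x \<in> carrier path_alg" by (rule dl_carrier[OF assms(1)])
  have m: "\<And>x. pa_mult (dl f x) (ba x) \<in> carrier path_alg" by (rule pa_mult_closed[OF c ba_carrier])
  have d0: "\<And>x w. rep (dl f x) (w, []) = 0"
    using stepA[OF c] assms(3) by (simp add: dl_def)
  have m1: "\<And>x. rep (pa_mult (dl f x) (ba x)) (v, [y]) = 0"
    using rep_m1[OF c ba_carrier] by (simp add: rep_arr0 d0)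
  have s1: "(\<lambda>z. pa_mult (dl f Cc) (ba Cc) z + pa_mult (dl f Dd) (ba Dd) z) \<in> carrier path_alg"
    using PA.a_closed[OF m m] by simp
  have s2: "(\<lambda>z. pa_mult (dl f Bb) (ba Bb) z + (pa_mult (dl f Cc) (ba Cc) z + pa_mult (dl f Dd) (ba Dd) z)) \<in> carrier path_alg"
    using PA.a_closed[OF m s1] by simp
  show ?thesis
    by (subst decomp[OF assms(1,2)]) (simp add: rep_a1[OF m s2] rep_a1[OF m s1] rep_a1[OF m m] m1)
qed

end




lemma detA_id:
  fixes g1 g2 g3 g4 h1 h2 h3 h4 :: "'k::field"
  shows "(g1*h1 - g1*h3 - g3*h3)*(g2*h2 - g2*h4 - g4*h4) - (g1*h2 - g1*h4 - g3*h4)*(g2*h1 - g2*h3 - g4*h3)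
     = - ((g1*g4 - g2*g3)*(h1*h4 - h2*h3))"
  by (simp add: algebra_simps)

lemma detB_id:
  fixes g1 g2 g3 g4 h1 h2 h3 h4 q :: "'k::field"
  shows "(h1*g1 - q*h3*g3)*(h2*g2 - q*h4*g4) - (h1*g2 - q*h3*g4)*(h2*g1 - q*h4*g3)
     = - (q * ((g1*g4 - g2*g3)*(h1*h4 - h2*h3)))"
  by (simp add: algebra_simps)

lemma tr_id:
  fixes g1 g2 g3 g4 h1 h2 h3 h4 q :: "'k::field"
  shows "(g1*h1 - g1*h3 - g3*h3)*(h2*g2 - q*h4*g4) - (g1*h2 - g1*h4 - g3*h4)*(h1*g2 - q*h3*g4)
       - (g2*h1 - g2*h3 - g4*h3)*(h2*g1 - q*h4*g3) + (g2*h2 - g2*h4 - g4*h4)*(h1*g1 - q*h3*g3)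
     = - ((q + 1) * ((g1*g4 - g2*g3)*(h1*h4 - h2*h3)))"
  by (simp add: algebra_simps)

lemma final_core:
  fixes p q D l m :: "'k::field"
  assumes "D \<noteq> 0" "l^2 * (p * m^2) = q * D^2" "l*m*(p+1) = D*(q+1)"
  shows "p = q \<or> p * q = 1"
proof -
  have "p * (D*(q+1))^2 = p * (l*m*(p+1))^2" using assms(3) by simp
  also have "\<dots> = (l^2 * (p * m^2)) * (p+1)^2" by (simp add: algebra_simps power2_eq_square)
  also have "\<dots> = q * D^2 * (p+1)^2" using assms(2) by simp
  finally have "D^2 * (p * (q+1)^2 - q * (p+1)^2) = 0" by (simp add: algebra_simps power2_eq_square)
  then have "p * (q+1)^2 - q * (p+1)^2 = 0" using assms(1) by simp
  then have "(p - q) * (1 - p * q) = 0" by (simp add: algebra_simps power2_eq_square)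
  then show ?thesis by auto
qed

lemma alg_case_id:
  fixes g1 g2 g3 g4 h1 h2 h3 h4 q p l m :: "'k::field"
  assumes dg: "g1*g4 - g2*g3 \<noteq> 0" and dh: "h1*h4 - h2*h3 \<noteq> 0"
    and e1: "g1*h1 - g1*h3 - g3*h3 = l" and e2: "g1*h2 - g1*h4 - g3*h4 = -l"
    and e3: "g2*h1 - g2*h3 - g4*h3 = 0" and e4: "g2*h2 - g2*h4 - g4*h4 = -l"
    and f1: "h1*g1 - q*h3*g3 = m" and f2: "h1*g2 - q*h3*g4 = 0"
    and f3: "h2*g1 - q*h4*g3 = 0" and f4: "h2*g2 - q*h4*g4 = -p*m"
  shows "p = q \<or> p * q = 1"
proof -
  define D where "D = (g1*g4 - g2*g3)*(h1*h4 - h2*h3)"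
  have D: "D \<noteq> 0" using dg dh by (simp add: D_def)
  have a: "l * (-l) - (-l) * 0 = - D"
    using detA_id[of g1 h1 h3 g3 g2 h2 h4 g4] unfolding e1 e2 e3 e4 D_def .
  have b: "m * (-p*m) - 0 * 0 = - (q * D)"
    using detB_id[of h1 g1 q h3 g3 h2 g2 h4 g4] unfolding f1 f2 f3 f4 D_def .
  have t: "l * (-p*m) - (-l) * 0 - 0 * 0 + (-l) * m = - ((q+1) * D)"
    using tr_id[of g1 h1 h3 g3 h2 g2 q h4 g4] unfolding e1 e2 e3 e4 f1 f2 f3 f4 D_def .
  have "l^2 = D" using a by (simp add: power2_eq_square)
  moreover have "p * m^2 = q * D" using b by (simp add: power2_eq_square algebra_simps)
  ultimately have "l^2 * (p * m^2) = q * D^2" by (simp add: power2_eq_square)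
  moreover have "l*m*(p+1) = D*(q+1)" using t by (simp add: algebra_simps)
  ultimately show ?thesis using final_core[OF D] by blast
qed

lemma alg_case_swap:
  fixes g1 g2 g3 g4 h1 h2 h3 h4 q p l m :: "'k::field"
  assumes dg: "g1*g4 - g2*g3 \<noteq> 0" and dh: "h1*h4 - h2*h3 \<noteq> 0"
    and e1: "g1*h1 - g1*h3 - g3*h3 = m" and e2: "g1*h2 - g1*h4 - g3*h4 = 0"
    and e3: "g2*h1 - g2*h3 - g4*h3 = 0" and e4: "g2*h2 - g2*h4 - g4*h4 = -p*m"
    and f1: "h1*g1 - q*h3*g3 = l" and f2: "h1*g2 - q*h3*g4 = -l"
    and f3: "h2*g1 - q*h4*g3 = 0" and f4: "h2*g2 - q*h4*g4 = -l"
  shows "p = q \<or> p * q = 1"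
proof -
  define D where "D = (g1*g4 - g2*g3)*(h1*h4 - h2*h3)"
  have D: "D \<noteq> 0" using dg dh by (simp add: D_def)
  have a: "m * (-p*m) - 0 * 0 = - D"
    using detA_id[of g1 h1 h3 g3 g2 h2 h4 g4] unfolding e1 e2 e3 e4 D_def .
  have b: "l * (-l) - (-l) * 0 = - (q * D)"
    using detB_id[of h1 g1 q h3 g3 h2 g2 h4 g4] unfolding f1 f2 f3 f4 D_def .
  have t: "m * (-l) - 0 * (-l) - 0 * 0 + (-p*m) * l = - ((q+1) * D)"
    using tr_id[of g1 h1 h3 g3 h2 g2 q h4 g4] unfolding e1 e2 e3 e4 f1 f2 f3 f4 D_def .
  have "p * m^2 = D" using a by (simp add: power2_eq_square algebra_simps)
  moreover have "l^2 = q * D" using b by (simp add: power2_eq_square)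
  ultimately have "l^2 * (p * m^2) = q * D^2" by (simp add: power2_eq_square)
  moreover have "l*m*(p+1) = D*(q+1)" using t by (simp add: algebra_simps)
  ultimately show ?thesis using final_core[OF D] by blast
qed

lemma ker2:
  fixes g1 g2 g3 g4 :: "'k::field"
  assumes "g1*g4 - g2*g3 = 0"
  shows "\<exists>s t. (s \<noteq> 0 \<or> t \<noteq> 0) \<and> s*g1 + t*g3 = 0 \<and> s*g2 + t*g4 = 0"
proof (cases "g1 \<noteq> 0 \<or> g3 \<noteq> 0")
  case True
  then show ?thesis using assms
    by (intro exI[of _ g3] exI[of _ "- g1"]) (auto simp: algebra_simps)
next
  case False
  show ?thesis
  proof (cases "g2 \<noteq> 0 \<or> g4 \<noteq> 0")
    case True
    then show ?thesis using False
      by (intro exI[of _ g4] exI[of _ "- g2"]) (auto simp: algebra_simps)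
  next
    case False2: False
    then show ?thesis using False by (intro exI[of _ 1] exI[of _ 0]) auto
  qed
qed


lemma pa_mult_sc: "pa_mult (\<lambda>z. if snd z = [] then c else 0) h = pa_smult c h"
proof (rule ext)
  fix z :: path
  obtain v zs where z: "z = (v, zs)" by (cases z)
  have "pa_mult (\<lambda>z. if snd z = [] then c else 0) h (v, zs)
      = (\<Sum>k\<le>length zs. if k = 0 then c * h (v, zs) else 0)"
    unfolding pa_mult_eq by (rule sum.cong) auto
  then show "pa_mult (\<lambda>z. if snd z = [] then c else 0) h z = pa_smult c h z"
    by (simp add: z pa_smult_def)
qed

lemma sc_carrier: "(\<lambda>z. if snd z = [] then c else 0) \<in> carrier (path_alg :: (path \<Rightarrow> 'k::field) ring)"
proof -
  have "(\<lambda>z::path. if snd z = [] then c else 0) = pa_smult c \<one>\<^bsub>path_alg\<^esub>"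
    by (rule ext) (simp add: pa_smult_def PA_one)
  then show ?thesis using pa_smult_carrier[OF PA.one_closed] by simp
qed

lemma cg_smult: "cg q f g \<Longrightarrow> cg q (pa_smult c f) (pa_smult c g)"
proof -
  assume "cg q f g"
  then have "pa_mult (\<lambda>z. if snd z = [] then c else 0) (\<lambda>z. f z - g z) \<in> D_ideal q"
    unfolding cg_def by (rule DI_lmult[OF _ sc_carrier])
  then show ?thesis unfolding pa_mult_sc cg_def by (simp add: pa_smult_def algebra_simps)
qed

lemma ba_arr: "ba Aa = arr_a" "ba Bb = arr_b" "ba Cc = arr_c" "ba Dd = arr_d"
  by (simp_all add: ba_def arr_a_def arr_b_def arr_c_def arr_d_def)

lemma R1_fun: "R1 = (\<lambda>z. pa_mult (ba Aa) (ba Bb) z - pa_mult (ba Aa) (ba Dd) z - pa_mult (ba Cc) (ba Dd) z)"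
  by (rule ext) (simp add: ba_arr arr_prods R1_def basis_path_def)

lemma R2_fun: "R2 q = (\<lambda>z. pa_mult (ba Bb) (ba Aa) z - pa_smult q (pa_mult (ba Dd) (ba Cc)) z)"
  by (rule ext) (simp add: ba_arr arr_prods R2_def basis_path_def pa_smult_def)

lemma R1_in: "R1 \<in> D_ideal (q::'k::field)"
  using PA.genideal_self[of "{R1, R2 q}"] R1_carrier R2_carrier by (auto simp: D_ideal_eq)

lemma R2_in: "R2 q \<in> D_ideal (q::'k::field)"
  using PA.genideal_self[of "{R1, R2 q}"] R1_carrier R2_carrier by (auto simp: D_ideal_eq)

lemma ba_bv_tgt: "pa_mult (ba x) (bv (tgt x)) = (ba x :: path \<Rightarrow> 'k::field)"
  by (simp add: bv_def ba_def basis_mult path_mult_def end_vtx_def)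

lemma bv_bv: "pa_mult (bv v) (bv v) = (bv v :: path \<Rightarrow> 'k::field)"
  by (simp add: bv_def basis_mult path_mult_def end_vtx_def)

lemma bv_sum: "(\<lambda>z. bv E1 z + bv E2 z) = (\<one>\<^bsub>path_alg\<^esub> :: path \<Rightarrow> 'k::field)"
proof (rule ext)
  fix z :: path
  obtain v zs where z: "z = (v, zs)" by (cases z)
  show "bv E1 z + bv E2 z = (\<one>\<^bsub>path_alg\<^esub> :: path \<Rightarrow> 'k::field) z"
    by (cases v) (auto simp: z bv_def basis_path_def PA_one)
qed

context DH
begin

lemma rep_neg:
  assumes g: "g \<in> carrier path_alg"
  shows "cg q2 (rep (\<lambda>z. - g z)) (\<lambda>z. - rep g z)"
proof -
  have ng: "(\<lambda>z. - g z) \<in> carrier path_alg" using PA.a_inv_closed[OF g] by (simp add: PA_neg g)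
  have "cg q2 (rep (\<lambda>z. g z + - g z)) (\<lambda>z. rep g z + rep (\<lambda>z. - g z) z)"
    by (rule rep_add[OF g ng])
  moreover have "rep (\<lambda>z. g z + - g z) \<in> D_ideal q2"
    using rep_ideal[OF DI_zero[of q1]] by simp
  ultimately have "(\<lambda>z. rep g z + rep (\<lambda>z. - g z) z) \<in> D_ideal q2"
    by (rule cg_ideal[OF cg_sym])
  then show ?thesis unfolding cg_def by (simp add: add.commute)
qed

lemma rep_diff:
  assumes f: "f \<in> carrier path_alg" and g: "g \<in> carrier path_alg"
  shows "cg q2 (rep (\<lambda>z. f z - g z)) (\<lambda>z. rep f z - rep g z)"
proof -
  have ng: "(\<lambda>z. - g z) \<in> carrier path_alg" using PA.a_inv_closed[OF g] by (simp add: PA_neg g)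
  have "cg q2 (rep (\<lambda>z. f z + - g z)) (\<lambda>z. rep f z + rep (\<lambda>z. - g z) z)"
    by (rule rep_add[OF f ng])
  moreover have "cg q2 (\<lambda>z. rep f z + rep (\<lambda>z. - g z) z) (\<lambda>z. rep f z + - rep g z)"
    by (rule cg_add[OF cg_refl rep_neg[OF g]])
  ultimately show ?thesis using cg_trans by simp
qed

lemma rel1:
  "\<exists>l m. \<forall>v x y. rep (ba Aa) (v, [x]) * rep (ba Bb) (tgt x, [y])
       - rep (ba Aa) (v, [x]) * rep (ba Dd) (tgt x, [y])
       - rep (ba Cc) (v, [x]) * rep (ba Dd) (tgt x, [y]) = l * R1 (v, [x, y]) + m * R2 q2 (v, [x, y])"
proof -
  let ?AB = "pa_mult (ba Aa) (ba Bb)" and ?AD = "pa_mult (ba Aa) (ba Dd)" and ?CD = "pa_mult (ba Cc) (ba Dd)"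
  have c: "?AB \<in> carrier path_alg" "?AD \<in> carrier path_alg" "?CD \<in> carrier path_alg"
    by (simp_all add: pa_mult_closed ba_carrier)
  have c2: "(\<lambda>z. ?AB z - ?AD z) \<in> carrier path_alg"
    using PA.minus_closed[OF c(1) c(2)] by (simp add: PA_minus c)
  let ?Z = "\<lambda>z. pa_mult (rep (ba Aa)) (rep (ba Bb)) z - pa_mult (rep (ba Aa)) (rep (ba Dd)) z
               - pa_mult (rep (ba Cc)) (rep (ba Dd)) z"
  have "cg q2 (rep R1) (\<lambda>z. rep (\<lambda>z. ?AB z - ?AD z) z - rep ?CD z)"
    unfolding R1_fun by (rule rep_diff[OF c2 c(3)])
  moreover have "cg q2 (\<lambda>z. rep (\<lambda>z. ?AB z - ?AD z) z - rep ?CD z) (\<lambda>z. (rep ?AB z - rep ?AD z) - rep ?CD z)"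
    by (rule cg_diff[OF rep_diff[OF c(1) c(2)] cg_refl])
  moreover have "cg q2 (\<lambda>z. (rep ?AB z - rep ?AD z) - rep ?CD z) ?Z"
    by (intro cg_diff rep_mult ba_carrier)
  ultimately have "cg q2 (rep R1) ?Z" using cg_trans by blast
  then have "?Z \<in> D_ideal q2"
    using cg_ideal[OF cg_sym] rep_ideal[OF R1_in] by blast
  from D_ideal_2[OF this] obtain l m where
    lm: "\<forall>v x y. ?Z (v, [x, y]) = l * R1 (v, [x, y]) + m * R2 q2 (v, [x, y])" by blast
  show ?thesis
    by (intro exI[of _ l] exI[of _ m] allI) (use lm in \<open>simp add: pa_mult_2 rep_arr0\<close>)
qed

lemma rel2:
  assumes lin: "\<And>c f. f \<in> carrier path_alg \<Longrightarrow> cg q2 (rep (pa_smult c f)) (pa_smult c (rep f))"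
  shows "\<exists>l m. \<forall>v x y. rep (ba Bb) (v, [x]) * rep (ba Aa) (tgt x, [y])
       - q1 * (rep (ba Dd) (v, [x]) * rep (ba Cc) (tgt x, [y])) = l * R1 (v, [x, y]) + m * R2 q2 (v, [x, y])"
proof -
  let ?BA = "pa_mult (ba Bb) (ba Aa)" and ?DC = "pa_mult (ba Dd) (ba Cc)"
  have c: "?BA \<in> carrier path_alg" "?DC \<in> carrier path_alg"
    by (simp_all add: pa_mult_closed ba_carrier)
  have c2: "pa_smult q1 ?DC \<in> carrier path_alg" by (rule pa_smult_carrier[OF c(2)])
  let ?Z = "\<lambda>z. pa_mult (rep (ba Bb)) (rep (ba Aa)) z - pa_smult q1 (pa_mult (rep (ba Dd)) (rep (ba Cc))) z"
  have "cg q2 (rep (R2 q1)) (\<lambda>z. rep ?BA z - rep (pa_smult q1 ?DC) z)"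
    unfolding R2_fun by (rule rep_diff[OF c(1) c2])
  moreover have "cg q2 (\<lambda>z. rep ?BA z - rep (pa_smult q1 ?DC) z) ?Z"
    by (intro cg_diff rep_mult ba_carrier cg_trans[OF lin[OF c(2)] cg_smult])
  ultimately have "cg q2 (rep (R2 q1)) ?Z" using cg_trans by blast
  then have "?Z \<in> D_ideal q2"
    using cg_ideal[OF cg_sym] rep_ideal[OF R2_in] by blast
  from D_ideal_2[OF this] obtain l m where
    lm: "\<forall>v x y. ?Z (v, [x, y]) = l * R1 (v, [x, y]) + m * R2 q2 (v, [x, y])" by blast
  show ?thesis
    by (intro exI[of _ l] exI[of _ m] allI) (use lm in \<open>simp add: pa_mult_2 rep_arr0 pa_smult_def\<close>)
qed

end


lemma idem01: "(x::'k::field) = x * x \<Longrightarrow> x = 0 \<or> x = 1"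
proof -
  assume "x = x * x"
  then have "x * (x - 1) = 0" by (simp add: algebra_simps)
  then show ?thesis by auto
qed

lemma ba_val: "ba x (v, [y]) = (if v = src x \<and> y = x then 1 else 0)"
  by (auto simp: ba_def basis_path_def)

lemma forward:
  fixes p q :: "'k::field"
  assumes iso: "D_alg_iso q p"
  shows "p = q \<or> p * q = 1"
proof -
  obtain \<phi> where \<phi>: "\<phi> \<in> ring_iso (D_alg q) (D_alg p)" and lin:
    "\<forall>c f g. f \<in> carrier path_alg \<longrightarrow> g \<in> carrier path_alg \<longrightarrow>
        \<phi> (D_ideal q +>\<^bsub>path_alg\<^esub> f) = D_ideal p +>\<^bsub>path_alg\<^esub> g \<longrightarrow>
        \<phi> (D_ideal q +>\<^bsub>path_alg\<^esub> pa_smult c f) = D_ideal p +>\<^bsub>path_alg\<^esub> pa_smult c g"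
    using iso unfolding D_alg_iso_def by blast
  define \<psi> where "\<psi> = inv_into (carrier (D_alg q)) \<phi>"
  have \<psi>: "\<psi> \<in> ring_iso (D_alg p) (D_alg q)"
    unfolding \<psi>_def by (rule ring_iso_set_sym[OF D_alg_ring \<phi>])
  interpret F: DH \<phi> q p using \<phi> by unfold_locales (simp add: ring_iso_def)
  interpret B: DH \<psi> p q using \<psi> by unfold_locales (simp add: ring_iso_def)
  have inj\<phi>: "inj_on \<phi> (carrier (D_alg q))"
    using \<phi> by (simp add: ring_iso_def bij_betw_def)
  have bk: "cg q (B.rep (F.rep f)) f" if f: "f \<in> carrier path_alg" for f
  proof -
    have "D_ideal q +>\<^bsub>path_alg\<^esub> B.rep (F.rep f) = \<psi> (D_ideal p +>\<^bsub>path_alg\<^esub> F.rep f)"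
      using B.rep_eq[OF F.rep_carrier[OF f]] by simp
    also have "\<dots> = \<psi> (\<phi> (D_ideal q +>\<^bsub>path_alg\<^esub> f))" using F.rep_eq[OF f] by simp
    also have "\<dots> = D_ideal q +>\<^bsub>path_alg\<^esub> f"
      unfolding \<psi>_def by (rule inv_into_f_f[OF inj\<phi>]) (use f in \<open>simp add: D_alg_carrier\<close>)
    finally show ?thesis
      by (subst coset_eq[symmetric]) (use f in \<open>simp_all add: B.rep_carrier F.rep_carrier\<close>)
  qed
  have linr: "cg p (F.rep (pa_smult c f)) (pa_smult c (F.rep f))" if f: "f \<in> carrier path_alg" for c f
  proof -
    have "D_ideal p +>\<^bsub>path_alg\<^esub> F.rep (pa_smult c f) = \<phi> (D_ideal q +>\<^bsub>path_alg\<^esub> pa_smult c f)"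
      using F.rep_eq[OF pa_smult_carrier[OF f]] by simp
    also have "\<dots> = D_ideal p +>\<^bsub>path_alg\<^esub> pa_smult c (F.rep f)"
      using lin F.rep_eq[OF f] f F.rep_carrier[OF f] by blast
    finally show ?thesis
      by (subst coset_eq[symmetric]) (use f in \<open>simp_all add: pa_smult_carrier F.rep_carrier\<close>)
  qed
  define L where "L x v y = F.rep (ba x) (v, [y])" for x v y
  define E where "E u w = F.rep (bv u) (w, [])" for u w
  have Eidem: "E u w = E u w * E u w" for u w
    using F.rep_m0[OF bv_carrier bv_carrier, of u u w] by (simp add: bv_bv E_def)
  have Esum: "E E1 w + E E2 w = 1" for w
  proof -
    have "E E1 w + E E2 w = F.rep (\<lambda>z. bv E1 z + bv E2 z) (w, [])"
      by (simp add: E_def F.rep_a0[OF bv_carrier bv_carrier])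
    also have "\<dots> = 1" using cg_0[OF F.rep_one, of w] by (simp add: bv_sum PA_one)
    finally show ?thesis .
  qed
  have Enz: "E u E1 \<noteq> 0 \<or> E u E2 \<noteq> 0" for u
  proof (rule ccontr)
    assume "\<not> ?thesis"
    then have "\<forall>w. F.rep (bv u) (w, []) = 0" by (simp add: E_def) (metis vtx.exhaust)
    then have "B.rep (F.rep (bv u)) (u, []) = 0" by (rule B.stepA[OF F.rep_carrier[OF bv_carrier]])
    moreover have "B.rep (F.rep (bv u)) (u, []) = bv u (u, [])" by (rule cg_0[OF bk[OF bv_carrier]])
    ultimately show False by (simp add: bv_def basis_path_def)
  qed
  have Ecases: "(E E1 E1 = 1 \<and> E E1 E2 = 0 \<and> E E2 E1 = 0 \<and> E E2 E2 = 1) \<or>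
                (E E1 E1 = 0 \<and> E E1 E2 = 1 \<and> E E2 E1 = 1 \<and> E E2 E2 = 0)"
  proof -
    have "E u w = 0 \<or> E u w = 1" for u w using idem01[OF Eidem] .
    then show ?thesis using Esum[of E1] Esum[of E2] Enz[of E1] Enz[of E2]
      by (smt (verit) add_cancel_left_left add_cancel_left_right one_neq_zero)
  qed
  have Lsrc: "L x v y = E (src x) v * L x v y" for x v y
    using F.rep_m1[OF bv_carrier ba_carrier, of "src x" x v y]
    by (simp add: bv_ba F.rep_arr0 L_def E_def)
  have Ltgt: "L x v y = L x v y * E (tgt x) (tgt y)" for x v y
    using F.rep_m1[OF ba_carrier bv_carrier, of x "tgt x" v y]
    by (simp add: ba_bv_tgt F.rep_arr0 L_def E_def)
  have Lvalid: "L x v y \<noteq> 0 \<Longrightarrow> src y = v" for x v y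
    using PA_carrierD[OF F.rep_carrier[OF ba_carrier], of x "(v, [y])"]
    by (simp add: L_def valid_path_def)
  have inj: "ta = 0 \<and> tb = 0 \<and> tc = 0 \<and> td = 0"
    if H: "\<And>v y. ta * L Aa v y + tb * L Bb v y + tc * L Cc v y + td * L Dd v y = 0" for ta tb tc td
  proof -
    let ?s = "\<lambda>x t. pa_smult t (ba x)"
    have sc: "\<And>x t. ?s x t \<in> carrier path_alg" by (rule pa_smult_carrier[OF ba_carrier])
    have s1: "(\<lambda>z. ?s Cc tc z + ?s Dd td z) \<in> carrier path_alg"
      using PA.a_closed[OF sc sc] by simp
    have s2: "(\<lambda>z. ?s Bb tb z + (?s Cc tc z + ?s Dd td z)) \<in> carrier path_alg"
      using PA.a_closed[OF sc s1] by simp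
    define f where "f = (\<lambda>z. ?s Aa ta z + (?s Bb tb z + (?s Cc tc z + ?s Dd td z)))"
    have fc: "f \<in> carrier path_alg" unfolding f_def using PA.a_closed[OF sc s2] by simp
    have r0: "F.rep (?s x t) (v, []) = 0" for x t v
      using cg_0[OF linr[OF ba_carrier], of t x v] by (simp add: pa_smult_def F.rep_arr0)
    have r1: "F.rep (?s x t) (v, [y]) = t * L x v y" for x t v y
      using cg_1[OF linr[OF ba_carrier], of t x v y] by (simp add: pa_smult_def L_def)
    have f0: "\<forall>v. F.rep f (v, []) = 0"
      unfolding f_def by (simp add: F.rep_a0[OF sc s2] F.rep_a0[OF sc s1] F.rep_a0[OF sc sc] r0)
    have f1: "\<forall>v x. F.rep f (v, [x]) = 0"
      unfolding f_def using H
      by (simp add: F.rep_a1[OF sc s2] F.rep_a1[OF sc s1] F.rep_a1[OF sc sc] r1 add.assoc)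
    have "f (v, [y]) = 0" for v y
      using B.stepA2[OF F.rep_carrier[OF fc] f0 f1, of v y] cg_1[OF bk[OF fc], of v y] by simp
    then have "f (E1, [Aa]) = 0" "f (E2, [Bb]) = 0" "f (E1, [Cc]) = 0" "f (E2, [Dd]) = 0" by auto
    then show ?thesis by (simp_all add: f_def pa_smult_def ba_val)
  qed
  obtain l m where R1e: "\<forall>v x y. L Aa v x * L Bb (tgt x) y - L Aa v x * L Dd (tgt x) y
       - L Cc v x * L Dd (tgt x) y = l * R1 (v, [x, y]) + m * R2 p (v, [x, y])"
    using F.rel1 unfolding L_def by blast
  obtain l' m' where R2e: "\<forall>v x y. L Bb v x * L Aa (tgt x) y
       - q * (L Dd v x * L Cc (tgt x) y) = l' * R1 (v, [x, y]) + m' * R2 p (v, [x, y])"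
    using F.rel2[OF linr] unfolding L_def by blast
  from Ecases show ?thesis
  proof
    assume Eid: "E E1 E1 = 1 \<and> E E1 E2 = 0 \<and> E E2 E1 = 0 \<and> E E2 E2 = 1"
    have Ez: "L x v y = 0" if "\<not> (v = src x \<and> src y = v)" for x v y
    proof (rule ccontr)
      assume nz: "L x v y \<noteq> 0"
      then have "src y = v" by (rule Lvalid)
      moreover have "E (src x) v \<noteq> 0" using nz Lsrc[of x v y] by auto
      then have "v = src x" using Eid by (cases v; cases "src x") auto
      ultimately show False using that by simp
    qed
    let ?g1 = "L Aa E1 Aa" and ?g2 = "L Aa E1 Cc" and ?g3 = "L Cc E1 Aa" and ?g4 = "L Cc E1 Cc"
    let ?h1 = "L Bb E2 Bb" and ?h2 = "L Bb E2 Dd" and ?h3 = "L Dd E2 Bb" and ?h4 = "L Dd E2 Dd"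
    have dg: "?g1 * ?g4 - ?g2 * ?g3 \<noteq> 0"
    proof
      assume "?g1 * ?g4 - ?g2 * ?g3 = 0"
      from ker2[OF this] obtain s t where st: "s \<noteq> 0 \<or> t \<noteq> 0" "s * ?g1 + t * ?g3 = 0" "s * ?g2 + t * ?g4 = 0"
        by blast
      have "s * L Aa v y + 0 * L Bb v y + t * L Cc v y + 0 * L Dd v y = 0" for v y
        using st(2,3) Ez[of v Aa y] Ez[of v Cc y] by (cases v; cases y) auto
      then show False using inj[of s 0 t 0] st(1) by blast
    qed
    have dh: "?h1 * ?h4 - ?h2 * ?h3 \<noteq> 0"
    proof
      assume "?h1 * ?h4 - ?h2 * ?h3 = 0"
      from ker2[OF this] obtain s t where st: "s \<noteq> 0 \<or> t \<noteq> 0" "s * ?h1 + t * ?h3 = 0" "s * ?h2 + t * ?h4 = 0"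
        by blast
      have "0 * L Aa v y + s * L Bb v y + 0 * L Cc v y + t * L Dd v y = 0" for v y
        using st(2,3) Ez[of v Bb y] Ez[of v Dd y] by (cases v; cases y) auto
      then show False using inj[of 0 s 0 t] st(1) by blast
    qed
    show ?thesis
    proof (rule alg_case_id[OF dg dh, where l=l and m=m'])
      show "?g1 * ?h1 - ?g1 * ?h3 - ?g3 * ?h3 = l" using R1e[rule_format, of E1 Aa Bb] by (simp add: R1_def R2_def)
      show "?g1 * ?h2 - ?g1 * ?h4 - ?g3 * ?h4 = - l" using R1e[rule_format, of E1 Aa Dd] by (simp add: R1_def R2_def)
      show "?g2 * ?h1 - ?g2 * ?h3 - ?g4 * ?h3 = 0" using R1e[rule_format, of E1 Cc Bb] by (simp add: R1_def R2_def)
      show "?g2 * ?h2 - ?g2 * ?h4 - ?g4 * ?h4 = - l" using R1e[rule_format, of E1 Cc Dd] by (simp add: R1_def R2_def)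
      show "?h1 * ?g1 - q * ?h3 * ?g3 = m'" using R2e[rule_format, of E2 Bb Aa] by (simp add: R1_def R2_def algebra_simps)
      show "?h1 * ?g2 - q * ?h3 * ?g4 = 0" using R2e[rule_format, of E2 Bb Cc] by (simp add: R1_def R2_def algebra_simps)
      show "?h2 * ?g1 - q * ?h4 * ?g3 = 0" using R2e[rule_format, of E2 Dd Aa] by (simp add: R1_def R2_def algebra_simps)
      show "?h2 * ?g2 - q * ?h4 * ?g4 = - p * m'" using R2e[rule_format, of E2 Dd Cc] by (simp add: R1_def R2_def algebra_simps)
    qed
  next
    assume Esw: "E E1 E1 = 0 \<and> E E1 E2 = 1 \<and> E E2 E1 = 1 \<and> E E2 E2 = 0"
    have Ez: "L x v y = 0" if "\<not> (v \<noteq> src x \<and> src y = v)" for x v y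
    proof (rule ccontr)
      assume nz: "L x v y \<noteq> 0"
      then have "src y = v" by (rule Lvalid)
      moreover have "E (src x) v \<noteq> 0" using nz Lsrc[of x v y] by auto
      then have "v \<noteq> src x" using Esw by (cases v; cases "src x") auto
      ultimately show False using that by simp
    qed
    let ?g1 = "L Aa E2 Bb" and ?g2 = "L Aa E2 Dd" and ?g3 = "L Cc E2 Bb" and ?g4 = "L Cc E2 Dd"
    let ?h1 = "L Bb E1 Aa" and ?h2 = "L Bb E1 Cc" and ?h3 = "L Dd E1 Aa" and ?h4 = "L Dd E1 Cc"
    have dg: "?g1 * ?g4 - ?g2 * ?g3 \<noteq> 0"
    proof
      assume "?g1 * ?g4 - ?g2 * ?g3 = 0"
      from ker2[OF this] obtain s t where st: "s \<noteq> 0 \<or> t \<noteq> 0" "s * ?g1 + t * ?g3 = 0" "s * ?g2 + t * ?g4 = 0"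
        by blast
      have "s * L Aa v y + 0 * L Bb v y + t * L Cc v y + 0 * L Dd v y = 0" for v y
        using st(2,3) Ez[of v Aa y] Ez[of v Cc y] by (cases v; cases y) auto
      then show False using inj[of s 0 t 0] st(1) by blast
    qed
    have dh: "?h1 * ?h4 - ?h2 * ?h3 \<noteq> 0"
    proof
      assume "?h1 * ?h4 - ?h2 * ?h3 = 0"
      from ker2[OF this] obtain s t where st: "s \<noteq> 0 \<or> t \<noteq> 0" "s * ?h1 + t * ?h3 = 0" "s * ?h2 + t * ?h4 = 0"
        by blast
      have "0 * L Aa v y + s * L Bb v y + 0 * L Cc v y + t * L Dd v y = 0" for v y
        using st(2,3) Ez[of v Bb y] Ez[of v Dd y] by (cases v; cases y) auto
      then show False using inj[of 0 s 0 t] st(1) by blast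
    qed
    show ?thesis
    proof (rule alg_case_swap[OF dg dh, where l=l' and m=m])
      show "?g1 * ?h1 - ?g1 * ?h3 - ?g3 * ?h3 = m" using R1e[rule_format, of E2 Bb Aa] by (simp add: R1_def R2_def)
      show "?g1 * ?h2 - ?g1 * ?h4 - ?g3 * ?h4 = 0" using R1e[rule_format, of E2 Bb Cc] by (simp add: R1_def R2_def)
      show "?g2 * ?h1 - ?g2 * ?h3 - ?g4 * ?h3 = 0" using R1e[rule_format, of E2 Dd Aa] by (simp add: R1_def R2_def)
      show "?g2 * ?h2 - ?g2 * ?h4 - ?g4 * ?h4 = - p * m" using R1e[rule_format, of E2 Dd Cc] by (simp add: R1_def R2_def algebra_simps)
      show "?h1 * ?g1 - q * ?h3 * ?g3 = l'" using R2e[rule_format, of E1 Aa Bb] by (simp add: R1_def R2_def algebra_simps)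
      show "?h1 * ?g2 - q * ?h3 * ?g4 = - l'" using R2e[rule_format, of E1 Aa Dd] by (simp add: R1_def R2_def algebra_simps)
      show "?h2 * ?g1 - q * ?h4 * ?g3 = 0" using R2e[rule_format, of E1 Cc Bb] by (simp add: R1_def R2_def algebra_simps)
      show "?h2 * ?g2 - q * ?h4 * ?g4 = - l'" using R2e[rule_format, of E1 Cc Dd] by (simp add: R1_def R2_def algebra_simps)
    qed
  qed
qed




lemma UNIV_arr: "(UNIV :: arr set) = {Aa, Bb, Cc, Dd}"
  using arr.exhaust by auto

lemma finite_arr[simp]: "finite (UNIV :: arr set)"
  by (simp add: UNIV_arr)

definition sw :: "vtx \<Rightarrow> vtx" where "sw v = (case v of E1 \<Rightarrow> E2 | E2 \<Rightarrow> E1)"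

lemma sw_sw[simp]: "sw (sw v) = v" by (cases v) (simp_all add: sw_def)
lemma sw_simps[simp]: "sw E1 = E2" "sw E2 = E1" by (simp_all add: sw_def)

fun Mp :: "(arr \<Rightarrow> arr \<Rightarrow> 'k::field) \<Rightarrow> arr list \<Rightarrow> arr list \<Rightarrow> 'k" where
  "Mp m [] [] = 1"
| "Mp m (x # xs) (y # ys) = m x y * Mp m xs ys"
| "Mp m _ _ = 0"

definition Ln :: "nat \<Rightarrow> arr list set" where "Ln n = {xs. length xs = n}"

lemma Ln_finite[simp]: "finite (Ln n)"
  using finite_lists_length_eq[OF finite_arr, of n] by (simp add: Ln_def)

lemma Ln_0: "Ln 0 = {[]}" by (auto simp: Ln_def)

lemma sum_Ln_Suc: "(\<Sum>xs\<in>Ln (Suc n). F xs) = (\<Sum>x\<in>UNIV. \<Sum>xs\<in>Ln n. F (x # xs))"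
proof -
  have img: "Ln (Suc n) = (\<lambda>(x, xs). x # xs) ` (UNIV \<times> Ln n)"
  proof
    show "Ln (Suc n) \<subseteq> (\<lambda>(x, xs). x # xs) ` (UNIV \<times> Ln n)"
    proof
      fix xs assume "xs \<in> Ln (Suc n)"
      then obtain y ys where "xs = y # ys" "length ys = n" by (cases xs) (auto simp: Ln_def)
      then show "xs \<in> (\<lambda>(x, xs). x # xs) ` (UNIV \<times> Ln n)"
        by (auto simp: Ln_def intro!: image_eqI[where x="(y, ys)"])
    qed
  qed (auto simp: Ln_def)
  have inj: "inj_on (\<lambda>(x, xs). x # xs) (UNIV \<times> Ln n)"
    by (auto simp: inj_on_def)
  show ?thesis
    by (simp add: img sum.reindex[OF inj] sum.cartesian_product prod.case_distrib)
qed

lemma sum_Ln_split: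
  assumes "k \<le> n"
  shows "(\<Sum>xs\<in>Ln n. F xs) = (\<Sum>us\<in>Ln k. \<Sum>vs\<in>Ln (n - k). F (us @ vs))"
proof -
  have img: "Ln n = (\<lambda>(us, vs). us @ vs) ` (Ln k \<times> Ln (n - k))"
  proof
    show "Ln n \<subseteq> (\<lambda>(us, vs). us @ vs) ` (Ln k \<times> Ln (n - k))"
    proof
      fix xs assume "xs \<in> Ln n"
      then show "xs \<in> (\<lambda>(us, vs). us @ vs) ` (Ln k \<times> Ln (n - k))"
        using assms by (auto simp: Ln_def intro!: image_eqI[where x="(take k xs, drop k xs)"])
    qed
  qed (use assms in \<open>auto simp: Ln_def\<close>)
  have inj: "inj_on (\<lambda>(us, vs). us @ vs) (Ln k \<times> Ln (n - k))"
    by (auto simp: inj_on_def Ln_def)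
  show ?thesis
    by (simp add: img sum.reindex[OF inj] sum.cartesian_product prod.case_distrib)
qed

lemma Mp_len: "Mp m xs ys \<noteq> 0 \<Longrightarrow> length xs = length ys"
  by (induction m xs ys rule: Mp.induct) auto

lemma Mp_append: "length us = length zs \<Longrightarrow> Mp m (us @ vs) (zs @ ws) = Mp m us zs * Mp m vs ws"
  by (induction m us zs rule: Mp.induct) auto

definition Th :: "(arr \<Rightarrow> arr \<Rightarrow> 'k::field) \<Rightarrow> (path \<Rightarrow> 'k) \<Rightarrow> (path \<Rightarrow> 'k)" where
  "Th m f = (\<lambda>z. \<Sum>xs\<in>Ln (length (snd z)). f (sw (fst z), xs) * Mp m xs (snd z))"

lemma Th_eq: "Th m f (w, ys) = (\<Sum>xs\<in>Ln (length ys). f (sw w, xs) * Mp m xs ys)"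
  by (simp add: Th_def)

definition compat :: "(arr \<Rightarrow> arr \<Rightarrow> 'k::field) \<Rightarrow> bool" where
  "compat m \<longleftrightarrow> (\<forall>x y. m x y \<noteq> 0 \<longrightarrow> src y = sw (src x) \<and> tgt y = sw (tgt x))"

lemma Mp_last:
  "Mp m us zs \<noteq> 0 \<Longrightarrow> us \<noteq> [] \<Longrightarrow> zs \<noteq> [] \<and> m (last us) (last zs) \<noteq> 0"
proof (induction m us zs rule: Mp.induct)
  case (2 m x xs y ys)
  then show ?case by (cases xs; cases ys) auto
qed auto

lemma end_match:
  assumes "compat m" "Mp m us zs \<noteq> 0"
  shows "end_vtx (sw w, us) = sw (end_vtx (w, zs))"
proof (cases "us = []")
  case True
  then have "zs = []" using Mp_len[OF assms(2)] by simp
  then show ?thesis using True by simp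
next
  case False
  then have "zs \<noteq> []" "m (last us) (last zs) \<noteq> 0" using Mp_last[OF assms(2)] by auto
  then show ?thesis using False assms(1) by (auto simp: end_vtx_def compat_def)
qed

lemma Th_mult:
  assumes C: "compat m"
  shows "Th m (pa_mult f g) = pa_mult (Th m f) (Th m g)"
proof (rule ext)
  fix z :: path
  obtain w ys where z: "z = (w, ys)" by (cases z)
  let ?n = "length ys"
  let ?e = "\<lambda>k. end_vtx (w, take k ys)"
  have "Th m (pa_mult f g) (w, ys) =
     (\<Sum>xs\<in>Ln ?n. \<Sum>k\<le>?n. f (sw w, take k xs) * g (end_vtx (sw w, take k xs), drop k xs) * Mp m xs ys)"
    unfolding Th_eq
    by (rule sum.cong[OF refl]) (simp add: pa_mult_eq sum_distrib_right Ln_def)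
  also have "\<dots> = (\<Sum>k\<le>?n. \<Sum>xs\<in>Ln ?n. f (sw w, take k xs) * g (end_vtx (sw w, take k xs), drop k xs) * Mp m xs ys)"
    by (rule sum.swap)
  also have "\<dots> = (\<Sum>k\<le>?n. (\<Sum>us\<in>Ln k. f (sw w, us) * Mp m us (take k ys)) *
                              (\<Sum>vs\<in>Ln (?n - k). g (sw (?e k), vs) * Mp m vs (drop k ys)))"
  proof (rule sum.cong[OF refl])
    fix k assume k: "k \<in> {..?n}"
    have "(\<Sum>xs\<in>Ln ?n. f (sw w, take k xs) * g (end_vtx (sw w, take k xs), drop k xs) * Mp m xs ys)
        = (\<Sum>us\<in>Ln k. \<Sum>vs\<in>Ln (?n - k). f (sw w, take k (us @ vs)) *
              g (end_vtx (sw w, take k (us @ vs)), drop k (us @ vs)) * Mp m (us @ vs) ys)"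
      using k by (intro sum_Ln_split) simp
    also have "\<dots> = (\<Sum>us\<in>Ln k. \<Sum>vs\<in>Ln (?n - k). (f (sw w, us) * Mp m us (take k ys)) *
              (g (sw (?e k), vs) * Mp m vs (drop k ys)))"
    proof (intro sum.cong[OF refl])
      fix us vs assume us: "us \<in> Ln k" and vs: "vs \<in> Ln (?n - k)"
      have lu: "length us = k" using us by (simp add: Ln_def)
      have "Mp m (us @ vs) ys = Mp m us (take k ys) * Mp m vs (drop k ys)"
        using Mp_append[of us "take k ys" m vs "drop k ys"] lu k by simp
      moreover have "Mp m us (take k ys) \<noteq> 0 \<Longrightarrow> end_vtx (sw w, us) = sw (?e k)"
        by (rule end_match[OF C])
      ultimately show "f (sw w, take k (us @ vs)) * g (end_vtx (sw w, take k (us @ vs)), drop k (us @ vs)) * Mp m (us @ vs) ys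
          = (f (sw w, us) * Mp m us (take k ys)) * (g (sw (?e k), vs) * Mp m vs (drop k ys))"
        using lu by (cases "Mp m us (take k ys) = 0") (simp_all add: ac_simps)
    qed
    also have "\<dots> = (\<Sum>us\<in>Ln k. f (sw w, us) * Mp m us (take k ys)) *
                    (\<Sum>vs\<in>Ln (?n - k). g (sw (?e k), vs) * Mp m vs (drop k ys))"
      by (simp add: sum_product)
    finally show "(\<Sum>xs\<in>Ln ?n. f (sw w, take k xs) * g (end_vtx (sw w, take k xs), drop k xs) * Mp m xs ys)
        = (\<Sum>us\<in>Ln k. f (sw w, us) * Mp m us (take k ys)) *
                    (\<Sum>vs\<in>Ln (?n - k). g (sw (?e k), vs) * Mp m vs (drop k ys))" .
  qed
  also have "\<dots> = pa_mult (Th m f) (Th m g) (w, ys)"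
    unfolding pa_mult_eq Th_eq
    by (rule sum.cong[OF refl]) (simp add: min_def)
  finally show "Th m (pa_mult f g) z = pa_mult (Th m f) (Th m g) z" by (simp add: z)
qed


lemma Th_add: "Th m (\<lambda>z. f z + g z) = (\<lambda>z. Th m f z + Th m g z)"
  by (simp add: Th_def distrib_right sum.distrib)

lemma Th_smult: "Th m (pa_smult c f) = pa_smult c (Th m f)"
  by (simp add: Th_def pa_smult_def sum_distrib_left mult.assoc)

lemma Th_one: "Th m \<one>\<^bsub>path_alg\<^esub> = \<one>\<^bsub>path_alg\<^esub>"
proof (rule ext)
  fix z :: path
  obtain w ys where z: "z = (w, ys)" by (cases z)
  show "Th m \<one>\<^bsub>path_alg\<^esub> z = \<one>\<^bsub>path_alg\<^esub> z"
  proof (cases ys)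
    case Nil then show ?thesis by (simp add: z Th_eq PA_one Ln_0)
  next
    case (Cons y ys')
    have "\<And>xs. xs \<in> Ln (length ys) \<Longrightarrow> xs \<noteq> []" using Cons by (auto simp: Ln_def)
    then show ?thesis using Cons by (simp add: z Th_eq PA_one)
  qed
qed

lemma valid_match:
  "compat m \<Longrightarrow> Mp m xs ys \<noteq> 0 \<Longrightarrow> valid_from (sw w) xs \<Longrightarrow> valid_from w ys"
proof (induction m xs ys arbitrary: w rule: Mp.induct)
  case (2 m x xs y ys)
  then have mxy: "m x y \<noteq> 0" and mp: "Mp m xs ys \<noteq> 0" by auto
  have sx: "src x = sw w" and vx: "valid_from (tgt x) xs" using 2 by auto
  have c: "src y = sw (src x)" "tgt y = sw (tgt x)" using mxy 2(2) unfolding compat_def by blast+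
  have "valid_from (sw (tgt y)) xs" using vx c(2) by simp
  then have "valid_from (tgt y) ys" using 2(1)[OF 2(2) mp] by blast
  then show ?case using c(1) sx by simp
qed auto

lemma Th_carrier:
  assumes C: "compat m" and f: "f \<in> carrier path_alg"
  shows "Th m f \<in> carrier path_alg"
proof (rule PA_carrierI)
  have "supp (Th m f) \<subseteq> (\<Union>p\<in>supp f. Pair (sw (fst p)) ` Ln (length (snd p)))"
  proof
    fix z assume "z \<in> supp (Th m f)"
    then obtain w ys where z: "z = (w, ys)" and nz: "Th m f (w, ys) \<noteq> 0"
      by (cases z) (auto simp: supp_def)
    then obtain xs where "xs \<in> Ln (length ys)" "f (sw w, xs) * Mp m xs ys \<noteq> 0"
      unfolding Th_eq using sum.not_neutral_contains_not_neutral by blast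
    then have "(sw w, xs) \<in> supp f" "z \<in> Pair (sw (fst (sw w, xs))) ` Ln (length (snd (sw w, xs)))"
      by (auto simp: z supp_def Ln_def)
    then show "z \<in> (\<Union>p\<in>supp f. Pair (sw (fst p)) ` Ln (length (snd p)))"
      by (rule UN_I)
  qed
  then show "finite (supp (Th m f))"
    by (rule finite_subset) (use PA_carrier_fin[OF f] in auto)
next
  fix z assume nz: "Th m f z \<noteq> 0"
  obtain w ys where z: "z = (w, ys)" by (cases z)
  obtain xs where "xs \<in> Ln (length ys)" "f (sw w, xs) * Mp m xs ys \<noteq> 0"
    using nz unfolding z Th_eq using sum.not_neutral_contains_not_neutral by blast
  then have "valid_path (sw w, xs)" "Mp m xs ys \<noteq> 0" using PA_carrierD[OF f] by auto
  then show "valid_path z" using valid_match[OF C] by (simp add: z valid_path_def)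
qed

lemma Th_hom:
  assumes C: "compat m"
  shows "Th m \<in> ring_hom path_alg (path_alg :: (path \<Rightarrow> 'k::field) ring)"
  by (rule ring_hom_memI) (simp_all add: Th_carrier[OF C] Th_mult[OF C] Th_add Th_one)

lemma Mp_inv:
  assumes I: "\<And>z y. (\<Sum>x\<in>UNIV. m z x * m' x y) = (if z = y then 1 else 0)"
  shows "zs \<in> Ln n \<Longrightarrow> ys \<in> Ln n \<Longrightarrow>
    (\<Sum>xs\<in>Ln n. Mp m zs xs * Mp m' xs ys) = (if zs = ys then 1 else (0::'k::field))"
proof (induction n arbitrary: zs ys)
  case 0 then show ?case by (simp add: Ln_0)
next
  case (Suc n)
  obtain z zs' where zs: "zs = z # zs'" "zs' \<in> Ln n" using Suc.prems(1) by (cases zs) (auto simp: Ln_def)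
  obtain y ys' where ys: "ys = y # ys'" "ys' \<in> Ln n" using Suc.prems(2) by (cases ys) (auto simp: Ln_def)
  have "(\<Sum>xs\<in>Ln (Suc n). Mp m zs xs * Mp m' xs ys)
      = (\<Sum>x\<in>UNIV. m z x * m' x y * (\<Sum>xs\<in>Ln n. Mp m zs' xs * Mp m' xs ys'))"
    unfolding sum_Ln_Suc zs ys by (simp add: sum_distrib_left ac_simps)
  also have "\<dots> = (\<Sum>x\<in>UNIV. m z x * m' x y) * (if zs' = ys' then 1 else 0)"
    by (simp add: Suc.IH[OF zs(2) ys(2)] sum_distrib_right)
  finally show ?case using I by (simp add: zs ys)
qed

lemma Th_inv:
  assumes I: "\<And>z y. (\<Sum>x\<in>UNIV. m z x * m' x y) = (if z = y then 1 else 0)"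
  shows "Th m' (Th m f) = (f :: path \<Rightarrow> 'k::field)"
proof (rule ext)
  fix z :: path
  obtain w ys where z: "z = (w, ys)" by (cases z)
  let ?n = "length ys"
  have "Th m' (Th m f) (w, ys) = (\<Sum>xs\<in>Ln ?n. (\<Sum>zs\<in>Ln ?n. f (w, zs) * Mp m zs xs) * Mp m' xs ys)"
    unfolding Th_eq by (rule sum.cong[OF refl]) (simp add: Th_eq Ln_def)
  also have "\<dots> = (\<Sum>zs\<in>Ln ?n. f (w, zs) * (\<Sum>xs\<in>Ln ?n. Mp m zs xs * Mp m' xs ys))"
    by (simp add: sum_distrib_right sum_distrib_left mult.assoc) (rule sum.swap)
  also have "\<dots> = (\<Sum>zs\<in>Ln ?n. if zs = ys then f (w, zs) else 0)"
  proof (rule sum.cong[OF refl])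
    fix zs assume zs: "zs \<in> Ln ?n"
    have ys: "ys \<in> Ln ?n" by (simp add: Ln_def)
    show "f (w, zs) * (\<Sum>xs\<in>Ln ?n. Mp m zs xs * Mp m' xs ys) = (if zs = ys then f (w, zs) else 0)"
      using Mp_inv[OF I zs ys] by simp
  qed
  also have "\<dots> = f (w, ys)" by (subst sum.delta[OF Ln_finite]) (simp add: Ln_def)
  finally show "Th m' (Th m f) z = f z" by (simp add: z)
qed


definition mf :: "'k::field \<Rightarrow> arr \<Rightarrow> arr \<Rightarrow> 'k" where
  "mf q x y = (case x of
      Aa \<Rightarrow> (case y of Bb \<Rightarrow> q - 1 | Dd \<Rightarrow> 1 | _ \<Rightarrow> 0)
    | Cc \<Rightarrow> (case y of Bb \<Rightarrow> 1 | _ \<Rightarrow> 0)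
    | Bb \<Rightarrow> (case y of Aa \<Rightarrow> -1 | Cc \<Rightarrow> -1 | _ \<Rightarrow> 0)
    | Dd \<Rightarrow> (case y of Aa \<Rightarrow> -1 | Cc \<Rightarrow> inverse q - 1 | _ \<Rightarrow> 0))"

definition mb :: "'k::field \<Rightarrow> arr \<Rightarrow> arr \<Rightarrow> 'k" where
  "mb q x y = (case x of
      Aa \<Rightarrow> (case y of Bb \<Rightarrow> q - 1 | Dd \<Rightarrow> - q | _ \<Rightarrow> 0)
    | Cc \<Rightarrow> (case y of Bb \<Rightarrow> - q | Dd \<Rightarrow> q | _ \<Rightarrow> 0)
    | Bb \<Rightarrow> (case y of Cc \<Rightarrow> 1 | _ \<Rightarrow> 0)
    | Dd \<Rightarrow> (case y of Aa \<Rightarrow> 1 | Cc \<Rightarrow> 1 - q | _ \<Rightarrow> 0))"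

lemma compat_mf: "compat (mf q)"
  unfolding compat_def
proof (intro allI impI)
  fix x y assume "mf q x y \<noteq> 0"
  then show "src y = sw (src x) \<and> tgt y = sw (tgt x)"
    by (cases x; cases y) (simp_all add: mf_def)
qed

lemma compat_mb: "compat (mb q)"
  unfolding compat_def
proof (intro allI impI)
  fix x y assume "mb q x y \<noteq> 0"
  then show "src y = sw (src x) \<and> tgt y = sw (tgt x)"
    by (cases x; cases y) (simp_all add: mb_def)
qed

lemma mf_mb: "q \<noteq> 0 \<Longrightarrow> (\<Sum>x\<in>UNIV. mf q z x * mb q x y) = (if z = y then 1 else (0::'k::field))"
  by (cases z; cases y) (simp_all add: UNIV_arr mf_def mb_def field_simps)

lemma mb_mf: "q \<noteq> 0 \<Longrightarrow> (\<Sum>x\<in>UNIV. mb q z x * mf q x y) = (if z = y then 1 else (0::'k::field))"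
  by (cases z; cases y) (simp_all add: UNIV_arr mf_def mb_def field_simps)

lemma Th_len2:
  assumes "\<And>v xs. length xs \<noteq> 2 \<Longrightarrow> f (v, xs) = 0"
  shows "Th m f (w, ys) = (case ys of [y1, y2] \<Rightarrow>
      (\<Sum>x1\<in>UNIV. \<Sum>x2\<in>UNIV. f (sw w, [x1, x2]) * (m x1 y1 * m x2 y2)) | _ \<Rightarrow> 0)"
proof (cases "length ys = 2")
  case True
  then obtain y1 y2 where ys: "ys = [y1, y2]"
    by (cases ys; cases "tl ys"; cases "tl (tl ys)") auto
  have "Th m f (w, ys) = (\<Sum>xs\<in>Ln (Suc (Suc 0)). f (sw w, xs) * Mp m xs [y1, y2])"
    by (simp add: Th_eq ys)
  also have "\<dots> = (\<Sum>x1\<in>UNIV. \<Sum>x2\<in>UNIV. f (sw w, [x1, x2]) * (m x1 y1 * m x2 y2))"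
    by (simp add: sum_Ln_Suc Ln_0)
  finally show ?thesis by (simp add: ys)
next
  case False
  then have "Th m f (w, ys) = 0"
    unfolding Th_eq using assms by (intro sum.neutral) (auto simp: Ln_def)
  moreover have "(case ys of [y1, y2] \<Rightarrow>
      (\<Sum>x1\<in>UNIV. \<Sum>x2\<in>UNIV. f (sw w, [x1, x2]) * (m x1 y1 * m x2 y2)) | _ \<Rightarrow> 0) = 0"
    using False by (auto split: list.split)
  ultimately show ?thesis by simp
qed

lemma Th_R1: "q \<noteq> 0 \<Longrightarrow> Th (mf q) R1 = R2 (inverse (q::'k::field))"
proof (rule ext)
  fix z :: path
  assume q: "q \<noteq> 0"
  obtain w ys where z: "z = (w, ys)" by (cases z)
  have l2: "\<And>v xs. length xs \<noteq> 2 \<Longrightarrow> R1 (v, xs) = (0::'k)" by (auto simp: R1_def)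
  show "Th (mf q) R1 z = R2 (inverse q) z"
  proof (cases "length ys = 2")
    case True
    then obtain y1 y2 where ys: "ys = [y1, y2]"
      by (cases ys; cases "tl ys"; cases "tl (tl ys)") auto
    have e: "Th (mf q) (R1) (w, [y1, y2]) = (\<Sum>x1\<in>UNIV. \<Sum>x2\<in>UNIV. (R1) (sw w, [x1, x2]) * (mf q x1 y1 * mf q x2 y2))"
      using Th_len2[where f=R1 and m="mf q" and w=w and ys="[y1, y2]", OF l2] by simp
    show ?thesis unfolding z ys e
      by (cases w; cases y1; cases y2) (simp_all add: UNIV_arr R1_def R2_def mf_def field_simps q)
  next
    case False
    have "Th (mf q) (R1) (w, ys) = (case ys of [y1, y2] \<Rightarrow>
      (\<Sum>x1\<in>UNIV. \<Sum>x2\<in>UNIV. (R1) (sw w, [x1, x2]) * (mf q x1 y1 * mf q x2 y2)) | _ \<Rightarrow> 0)"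
      using Th_len2[where f=R1 and m="mf q" and w=w and ys=ys, OF l2] by simp
    then show ?thesis unfolding z using False
      by (auto simp: R1_def R2_def split: list.split)
  qed
qed

lemma Th_R2: "q \<noteq> 0 \<Longrightarrow> Th (mf q) (R2 q) = (R1 :: path \<Rightarrow> 'k::field)"
proof (rule ext)
  fix z :: path
  assume q: "q \<noteq> 0"
  obtain w ys where z: "z = (w, ys)" by (cases z)
  have l2: "\<And>v xs. length xs \<noteq> 2 \<Longrightarrow> R2 q (v, xs) = (0::'k)" by (auto simp: R2_def)
  show "Th (mf q) (R2 q) z = R1 z"
  proof (cases "length ys = 2")
    case True
    then obtain y1 y2 where ys: "ys = [y1, y2]"
      by (cases ys; cases "tl ys"; cases "tl (tl ys)") auto
    have e: "Th (mf q) (R2 q) (w, [y1, y2]) = (\<Sum>x1\<in>UNIV. \<Sum>x2\<in>UNIV. (R2 q) (sw w, [x1, x2]) * (mf q x1 y1 * mf q x2 y2))"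
      using Th_len2[where f="R2 q" and m="mf q" and w=w and ys="[y1, y2]", OF l2] by simp
    show ?thesis unfolding z ys e
      by (cases w; cases y1; cases y2) (simp_all add: UNIV_arr R1_def R2_def mf_def field_simps q)
  next
    case False
    have "Th (mf q) (R2 q) (w, ys) = (case ys of [y1, y2] \<Rightarrow>
      (\<Sum>x1\<in>UNIV. \<Sum>x2\<in>UNIV. (R2 q) (sw w, [x1, x2]) * (mf q x1 y1 * mf q x2 y2)) | _ \<Rightarrow> 0)"
      using Th_len2[where f="R2 q" and m="mf q" and w=w and ys=ys, OF l2] by simp
    then show ?thesis unfolding z using False
      by (auto simp: R1_def R2_def split: list.split)
  qed
qed


lemma Th_vimage:
  assumes "compat m"
  shows "ideal {f \<in> carrier path_alg. Th m f \<in> D_ideal p} (path_alg :: (path \<Rightarrow> 'k::field) ring)"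
proof -
  interpret H: ring_hom_ring path_alg path_alg "Th m"
    by (rule ring_hom_ringI2[OF ring_path_alg ring_path_alg Th_hom[OF assms]])
  show ?thesis by (rule H.ideal_vimage[OF D_ideal_ideal])
qed

lemma coset_zero_iff: "x \<in> carrier path_alg \<Longrightarrow> (D_ideal p +>\<^bsub>path_alg\<^esub> x = D_ideal p) \<longleftrightarrow> x \<in> D_ideal (p::'k::field)"
proof
  assume x: "x \<in> carrier path_alg" and e: "D_ideal p +>\<^bsub>path_alg\<^esub> x = D_ideal p"
  have "x \<in> D_ideal p +>\<^bsub>path_alg\<^esub> x" by (rule abelian_subgroup.a_rcos_self[OF DI_abel x])
  then show "x \<in> D_ideal p" using e by simp
qed (rule coset_ideal)

lemma backward_inv:
  fixes q :: "'k::field"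
  assumes q: "q \<noteq> 0"
  shows "D_alg_iso q (inverse q)"
proof -
  define p where "p = inverse q"
  let ?T = "Th (mf q)" and ?T' = "Th (mb q)"
  have inv1: "\<And>f. ?T' (?T f) = f" by (rule Th_inv[OF mf_mb[OF q]])
  have inv2: "\<And>f. ?T (?T' f) = f" by (rule Th_inv[OF mb_mf[OF q]])
  have Tc: "\<And>f. f \<in> carrier path_alg \<Longrightarrow> ?T f \<in> carrier path_alg" by (rule Th_carrier[OF compat_mf])
  have Tc': "\<And>f. f \<in> carrier path_alg \<Longrightarrow> ?T' f \<in> carrier path_alg" by (rule Th_carrier[OF compat_mb])
  have sub1: "D_ideal q \<subseteq> {f \<in> carrier path_alg. ?T f \<in> D_ideal p}"
    unfolding D_ideal_eq[of q]
  proof (rule PA.genideal_minimal[OF Th_vimage[OF compat_mf]])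
    show "{R1, R2 q} \<subseteq> {f \<in> carrier path_alg. ?T f \<in> D_ideal p}"
      using R1_carrier R2_carrier Th_R1[OF q] Th_R2[OF q] R1_in[of p] R2_in[of p]
      by (auto simp: p_def)
  qed
  have sub2: "D_ideal p \<subseteq> {f \<in> carrier path_alg. ?T' f \<in> D_ideal q}"
    unfolding D_ideal_eq[of p]
  proof (rule PA.genideal_minimal[OF Th_vimage[OF compat_mb]])
    have "?T' R1 = R2 q" using inv1[of "R2 q"] Th_R2[OF q] by simp
    moreover have "?T' (R2 p) = R1" using inv1[of R1] Th_R1[OF q] by (simp add: p_def)
    ultimately show "{R1, R2 p} \<subseteq> {f \<in> carrier path_alg. ?T' f \<in> D_ideal q}"
      using R1_carrier R2_carrier R1_in[of q] R2_in[of q] by auto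
  qed
  define h where "h = (\<lambda>f. D_ideal p +>\<^bsub>path_alg\<^esub> f) \<circ> ?T"
  have hh: "h \<in> ring_hom path_alg (D_alg p)"
    unfolding h_def by (rule ring_hom_trans[OF Th_hom[OF compat_mf] D_alg_hom])
  interpret H: ring_hom_ring path_alg "D_alg p" h
    by (rule ring_hom_ringI2[OF ring_path_alg D_alg_ring hh])
  have ker: "a_kernel path_alg (D_alg p) h = D_ideal q"
  proof
    show "a_kernel path_alg (D_alg p) h \<subseteq> D_ideal q"
    proof
      fix f assume "f \<in> a_kernel path_alg (D_alg p) h"
      then have f: "f \<in> carrier path_alg" and "D_ideal p +>\<^bsub>path_alg\<^esub> ?T f = D_ideal p"
        by (auto simp: a_kernel_def' h_def D_alg_zero)
      then have "?T f \<in> D_ideal p" using coset_zero_iff[OF Tc[OF f]] by simp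
      then have "?T' (?T f) \<in> D_ideal q" using sub2 by blast
      then show "f \<in> D_ideal q" using inv1 by simp
    qed
  next
    show "D_ideal q \<subseteq> a_kernel path_alg (D_alg p) h"
    proof
      fix f assume f: "f \<in> D_ideal q"
      then have fc: "f \<in> carrier path_alg" and "?T f \<in> D_ideal p" using sub1 by auto
      then show "f \<in> a_kernel path_alg (D_alg p) h"
        using coset_zero_iff[OF Tc[OF fc]] by (simp add: a_kernel_def' h_def D_alg_zero)
    qed
  qed
  have surj: "h ` carrier path_alg = carrier (D_alg p)"
  proof
    show "h ` carrier path_alg \<subseteq> carrier (D_alg p)" using ring_hom_closed[OF hh] by blast
    show "carrier (D_alg p) \<subseteq> h ` carrier path_alg"
    proof
      fix X assume "X \<in> carrier (D_alg p)"
      then obtain g where g: "g \<in> carrier path_alg" "X = D_ideal p +>\<^bsub>path_alg\<^esub> g"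
        by (auto simp: D_alg_carrier)
      then have "X = h (?T' g)" by (simp add: h_def inv2)
      then show "X \<in> h ` carrier path_alg" using Tc'[OF g(1)] by blast
    qed
  qed
  define \<phi> where "\<phi> = (\<lambda>X. the_elem (h ` X))"
  have iso0: "(\<lambda>X. the_elem (h ` X)) \<in> ring_iso (path_alg Quot (a_kernel path_alg (D_alg p) h)) (D_alg p)"
    by (rule H.FactRing_iso_set[OF surj])
  have iso: "\<phi> \<in> ring_iso (D_alg q) (D_alg p)"
    using iso0 unfolding ker \<phi>_def D_alg_def[of q, symmetric] .
  have phi_eq: "\<phi> (D_ideal q +>\<^bsub>path_alg\<^esub> f) = D_ideal p +>\<^bsub>path_alg\<^esub> ?T f" if f: "f \<in> carrier path_alg" for f
    using H.the_elem_simp[OF f] unfolding ker \<phi>_def by (simp add: h_def)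
  have lin: "\<phi> (D_ideal q +>\<^bsub>path_alg\<^esub> pa_smult c f) = D_ideal p +>\<^bsub>path_alg\<^esub> pa_smult c g"
    if f: "f \<in> carrier path_alg" and g: "g \<in> carrier path_alg"
      and e: "\<phi> (D_ideal q +>\<^bsub>path_alg\<^esub> f) = D_ideal p +>\<^bsub>path_alg\<^esub> g" for c f g
  proof -
    have "cg p (?T f) g" using e phi_eq[OF f] coset_eq[OF Tc[OF f] g] by simp
    then have "cg p (pa_smult c (?T f)) (pa_smult c g)" by (rule cg_smult)
    then have "D_ideal p +>\<^bsub>path_alg\<^esub> pa_smult c (?T f) = D_ideal p +>\<^bsub>path_alg\<^esub> pa_smult c g"
      using coset_eq[OF pa_smult_carrier[OF Tc[OF f]] pa_smult_carrier[OF g]] by simp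
    then show ?thesis using phi_eq[OF pa_smult_carrier[OF f]] by (simp add: Th_smult)
  qed
  show ?thesis unfolding D_alg_iso_def p_def[symmetric]
    using iso lin by blast
qed

lemma backward_refl: "D_alg_iso q (q::'k::field)"
  unfolding D_alg_iso_def
proof (intro exI[of _ id] conjI allI impI)
  show "id \<in> ring_iso (D_alg q) (D_alg q)" by (rule ring_iso_set_refl)
  fix c f g assume f: "f \<in> carrier (path_alg :: (path \<Rightarrow> 'k) ring)" and g: "g \<in> carrier (path_alg :: (path \<Rightarrow> 'k) ring)"
    and e: "id (D_ideal q +>\<^bsub>path_alg\<^esub> f) = D_ideal q +>\<^bsub>path_alg\<^esub> g"
  have "cg q f g" using e coset_eq[OF f g] by simp
  then have "cg q (pa_smult c f) (pa_smult c g)" by (rule cg_smult)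
  then show "id (D_ideal q +>\<^bsub>path_alg\<^esub> pa_smult c f) = D_ideal q +>\<^bsub>path_alg\<^esub> pa_smult c g"
    using coset_eq[OF pa_smult_carrier[OF f] pa_smult_carrier[OF g]] by simp
qed

theorem proposition3p9:
  fixes p q :: "'k::field_char_0"
  assumes "alg_closed TYPE('k)"
    and "p \<noteq> 0" and "q \<noteq> 0"
  shows "D_alg_iso q p \<longleftrightarrow> (p = q \<or> p = inverse q)"
proof
  assume "D_alg_iso q p"
  then have "p = q \<or> p * q = 1" by (rule forward)
  then show "p = q \<or> p = inverse q" using assms(3) by (auto simp: field_simps)
next
  assume "p = q \<or> p = inverse q"
  then show "D_alg_iso q p" using backward_refl backward_inv[OF assms(3)] by auto
qed


end
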